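(* Let $p,q,l,N\in\mathbb{Z}_{\geq 0}$, $s=p+q$, and let $M=(M_1,\dots,M_s)\in\mathrm{Sym}_N^{p}\times\mathrm{Alt}_N^{q}$. Suppose there is a subspace $V\subseteq\mathbb{C}^N$ of dimension $2^sl$ such that $M_1V+\dots+M_sV$ has dimension $s2^sl$. Then there is $g\in\mathrm{GL}_N(\mathbb{C})$ such that for each $i\in\{1,\dots,s\}$, the $N\times l$ matrix formed by the first $l$ columns of $gM_ig^T$ has the following block form (blocks of $l$ rows each, followed by a final block of $N-(s+1)l$ rows): the first block is $0_{l\times l}$, the $(i+1)$-st block is the identity $\mathrm{Id}_l$, all other blocks of size $l\times l$ are $0$, and the final $(N-(s+1)l)\times l$ block is $0$.
   Context: $\mathrm{Sym}_N$ and $\mathrm{Alt}_N$ denote the spaces of symmetric, respectively skew-symmetric, complex $N\times N$ matrices; the first $p$ entries of $M$ are symmetric and the last $q$ are skew-symmetric. *)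

theory Defs
  imports Jordan_Normal_Form.VS_Connect
begin

abbreviation cvec_space :: "nat \<Rightarrow> (complex, complex vec) module" where
  "cvec_space N \<equiv> module_vec TYPE(complex) N"

definition csubspace :: "nat \<Rightarrow> complex vec set \<Rightarrow> bool" where
  "csubspace N W \<longleftrightarrow> subspace class_ring W (cvec_space N)"

definition cdim :: "nat \<Rightarrow> complex vec set \<Rightarrow> nat" where
  "cdim N W = vectorspace.dim class_ring ((cvec_space N)\<lparr>carrier := W\<rparr>)"

text \<open>The sum of images M_1 V + ... + M_s V (as a subset of C^N).\<close>
definition img_sum :: "nat \<Rightarrow> complex mat list \<Rightarrow> complex vec set \<Rightarrow> complex vec set" where
  "img_sum N Ms V =
     {foldr (+) (map2 (\<lambda>A v. A *\<^sub>v v) Ms vs) (0\<^sub>v N) | vs. length vs = length Ms \<and> set vs \<subseteq> V}"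

end

theory Submission
  imports Defs Jordan_Normal_Form.DL_Rank
begin


definition injm :: "complex mat \<Rightarrow> bool" where
  "injm A \<longleftrightarrow> (\<forall>v \<in> carrier_vec (dim_col A). A *\<^sub>v v = 0\<^sub>v (dim_row A) \<longrightarrow> v = 0\<^sub>v (dim_col A))"

lemma injmD: assumes "injm A" "A \<in> carrier_mat n m" "v \<in> carrier_vec m" "A *\<^sub>v v = 0\<^sub>v n"
  shows "v = 0\<^sub>v m" using assms unfolding injm_def by auto

lemma injmI: assumes "A \<in> carrier_mat n m" "\<And>v. v \<in> carrier_vec m \<Longrightarrow> A *\<^sub>v v = 0\<^sub>v n \<Longrightarrow> v = 0\<^sub>v m"
  shows "injm A" using assms unfolding injm_def by auto

lemma more_unknowns:
  fixes A :: "complex mat"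
  assumes A: "A \<in> carrier_mat n m" and nm: "n < m"
  shows "\<exists>v \<in> carrier_vec m. v \<noteq> 0\<^sub>v m \<and> A *\<^sub>v v = 0\<^sub>v n"
proof -
  define A' where "A' = mat\<^sub>r m m (\<lambda>i. if i = n then 0\<^sub>v m else vec m (\<lambda>j. if i < n then A $$ (i,j) else 0))"
  have d: "det A' = 0" unfolding A'_def by (rule det_row_0[OF nm]) auto
  have A'c: "A' \<in> carrier_mat m m" by (simp add: A'_def)
  from det_0_iff_vec_prod_zero_field[OF A'c] d obtain v where
    v: "v \<in> carrier_vec m" "v \<noteq> 0\<^sub>v m" "A' *\<^sub>v v = 0\<^sub>v m" by auto
  have "A *\<^sub>v v = 0\<^sub>v n"
  proof (rule eq_vecI)
    fix i assume "i < dim_vec (0\<^sub>v n)" hence i: "i < n" by simp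
    have r: "row A' i = row A i" using i nm A by (auto simp: A'_def)
    have "(A' *\<^sub>v v) $ i = (A *\<^sub>v v) $ i" using i nm A A'c r by auto
    thus "(A *\<^sub>v v) $ i = 0\<^sub>v n $ i" using v(3) i nm by auto
  qed (use A in auto)
  thus ?thesis using v by auto
qed

lemma injm_le: assumes "A \<in> carrier_mat n m" "injm A" shows "m \<le> n"
proof (rule ccontr)
  assume "\<not> m \<le> n"
  then obtain v where "v \<in> carrier_vec m" "v \<noteq> 0\<^sub>v m" "A *\<^sub>v v = 0\<^sub>v n"
    using more_unknowns[OF assms(1)] by auto
  thus False using injmD[OF assms(2,1)] by auto
qed

lemma injm_square_inv:
  assumes A: "A \<in> carrier_mat n n" and i: "injm A"
  shows "\<exists>B \<in> carrier_mat n n. A * B = 1\<^sub>m n \<and> B * A = 1\<^sub>m n"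
proof -
  have "det A \<noteq> 0" using det_0_iff_vec_prod_zero_field[OF A] injmD[OF i A] by auto
  from det_non_zero_imp_unit[OF A this, of "()"] show ?thesis
    unfolding Units_def ring_mat_def by auto
qed

lemma injm_square_invertible:
  assumes A: "A \<in> carrier_mat n n" and i: "injm A"
  shows "invertible_mat A"
proof -
  obtain B where B: "B \<in> carrier_mat n n" "A * B = 1\<^sub>m n" "B * A = 1\<^sub>m n"
    using injm_square_inv[OF assms] by auto
  show ?thesis unfolding invertible_mat_def inverts_mat_def square_mat.simps
    using A B by auto
qed

lemma injm_mult: assumes A: "A \<in> carrier_mat n m" and B: "B \<in> carrier_mat m k"
  and iA: "injm A" and iB: "injm B" shows "injm (A * B)"
proof (rule injmI)
  show "A * B \<in> carrier_mat n k" using A B by auto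
  fix v assume v: "v \<in> carrier_vec k" and "A * B *\<^sub>v v = 0\<^sub>v n"
  hence "A *\<^sub>v (B *\<^sub>v v) = 0\<^sub>v n" using A B by auto
  hence "B *\<^sub>v v = 0\<^sub>v m" using injmD[OF iA A] B v by auto
  thus "v = 0\<^sub>v k" using injmD[OF iB B v] by auto
qed

definition appc :: "'a mat \<Rightarrow> 'a mat \<Rightarrow> 'a mat" where
  "appc A B = mat (dim_row A) (dim_col A + dim_col B)
     (\<lambda>(i,j). if j < dim_col A then A $$ (i,j) else B $$ (i, j - dim_col A))"

lemma appc_carrier[simp]: "A \<in> carrier_mat n m \<Longrightarrow> B \<in> carrier_mat n k \<Longrightarrow> appc A B \<in> carrier_mat n (m + k)"
  unfolding appc_def by auto

lemma appc_dims[simp]: "dim_row (appc A B) = dim_row A" "dim_col (appc A B) = dim_col A + dim_col B"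
  unfolding appc_def by auto

lemma appc_index: "i < dim_row A \<Longrightarrow> j < dim_col A + dim_col B \<Longrightarrow>
   appc A B $$ (i,j) = (if j < dim_col A then A $$ (i,j) else B $$ (i, j - dim_col A))"
  unfolding appc_def by auto

lemma row_appc: assumes A: "A \<in> carrier_mat n m" and B: "B \<in> carrier_mat n k" and i: "i < n"
  shows "row (appc A B) i = row A i @\<^sub>v row B i"
  by (rule eq_vecI, insert A B i, auto simp: appc_index)

lemma col_appc: assumes A: "A \<in> carrier_mat n m" and B: "B \<in> carrier_mat n k" and j: "j < m + k"
  shows "col (appc A B) j = (if j < m then col A j else col B (j - m))"
  by (rule eq_vecI, insert A B j, auto simp: appc_index)

lemma appc_mult_vec_app:
  assumes A: "A \<in> carrier_mat n m" and B: "B \<in> carrier_mat n k"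
    and x: "x \<in> carrier_vec m" and y: "y \<in> carrier_vec k"
  shows "appc A B *\<^sub>v (x @\<^sub>v y) = A *\<^sub>v x + B *\<^sub>v y"
proof (rule eq_vecI)
  fix i assume "i < dim_vec (A *\<^sub>v x + B *\<^sub>v y)"
  hence i: "i < n" using A B by auto
  have "(appc A B *\<^sub>v (x @\<^sub>v y)) $ i = (row A i @\<^sub>v row B i) \<bullet> (x @\<^sub>v y)"
    using i A B by (auto simp: row_appc)
  also have "\<dots> = row A i \<bullet> x + row B i \<bullet> y"
    by (rule scalar_prod_append, insert A B x y i, auto)
  finally show "(appc A B *\<^sub>v (x @\<^sub>v y)) $ i = (A *\<^sub>v x + B *\<^sub>v y) $ i" using i A B by auto
qed (insert A B, auto)

lemma appc_mult_vec:
  assumes A: "A \<in> carrier_mat n m" and B: "B \<in> carrier_mat n k"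
    and v: "v \<in> carrier_vec (m + k)"
  shows "appc A B *\<^sub>v v = A *\<^sub>v vec_first v m + B *\<^sub>v vec_last v k"
  using appc_mult_vec_app[OF A B, of "vec_first v m" "vec_last v k"] vec_first_last_append[OF v] by auto

lemma mult_appc: assumes X: "X \<in> carrier_mat r n" and A: "A \<in> carrier_mat n m" and B: "B \<in> carrier_mat n k"
  shows "X * appc A B = appc (X * A) (X * B)"
  by (rule eq_matI, insert X A B, auto simp: appc_index col_appc)

lemma appc_assoc: assumes A: "A \<in> carrier_mat n m" and B: "B \<in> carrier_mat n k" and C: "C \<in> carrier_mat n t"
  shows "appc (appc A B) C = appc A (appc B C)"
  by (rule eq_matI, insert A B C, auto simp: appc_index)



definition ecol :: "nat \<Rightarrow> nat \<Rightarrow> complex mat" where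
  "ecol n j = mat n 1 (\<lambda>(i,_). if i = j then 1 else 0)"

lemma ecol_carrier[simp]: "ecol n j \<in> carrier_mat n 1" unfolding ecol_def by auto

lemma ecol_mult: assumes "j < n" "y \<in> carrier_vec 1"
  shows "ecol n j *\<^sub>v y = (y $ 0) \<cdot>\<^sub>v unit_vec n j"
proof (rule eq_vecI)
  fix i assume "i < dim_vec (y $ 0 \<cdot>\<^sub>v unit_vec n j)" hence i: "i < n" by simp
  have "(ecol n j *\<^sub>v y) $ i = row (ecol n j) i \<bullet> y" using i by (simp add: ecol_def)
  also have "\<dots> = (\<Sum>t<1. row (ecol n j) i $ t * y $ t)"
    unfolding scalar_prod_def using assms by (simp add: lessThan_atLeast0)
  also have "\<dots> = (if i = j then y $ 0 else 0)" using i by (simp add: ecol_def)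
  finally show "(ecol n j *\<^sub>v y) $ i = (y $ 0 \<cdot>\<^sub>v unit_vec n j) $ i" using i assms by auto
qed (simp add: ecol_def)

lemma extend_step:
  assumes A: "A \<in> carrier_mat n m" and iA: "injm A" and mn: "m < n"
  shows "\<exists>j<n. injm (appc A (ecol n j))"
proof (rule ccontr)
  assume "\<not> ?thesis"
  hence nj: "\<And>j. j < n \<Longrightarrow> \<not> injm (appc A (ecol n j))" by auto
  have "\<forall>j<n. \<exists>y \<in> carrier_vec m. A *\<^sub>v y = unit_vec n j"
  proof (intro allI impI)
    fix j assume j: "j < n"
    have Ac: "appc A (ecol n j) \<in> carrier_mat n (m+1)" using appc_carrier[OF A ecol_carrier] by simp
    have dims: "dim_col (appc A (ecol n j)) = m+1" "dim_row (appc A (ecol n j)) = n" using Ac by auto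
    from nj[OF j] obtain v where v: "v \<in> carrier_vec (m+1)" "appc A (ecol n j) *\<^sub>v v = 0\<^sub>v n" "v \<noteq> 0\<^sub>v (m+1)"
      unfolding injm_def dims by auto
    define x where "x = vec_first v m"
    define y where "y = vec_last v 1"
    have x: "x \<in> carrier_vec m" and y: "y \<in> carrier_vec 1" unfolding x_def y_def by auto
    have vxy: "v = x @\<^sub>v y" unfolding x_def y_def using v(1) by simp
    have eq: "A *\<^sub>v x + (y $ 0) \<cdot>\<^sub>v unit_vec n j = 0\<^sub>v n"
      using v(2) appc_mult_vec_app[OF A ecol_carrier x y] ecol_mult[OF j y] vxy by simp
    have c: "y $ 0 \<noteq> 0"
    proof
      assume "y $ 0 = 0"
      hence "A *\<^sub>v x + 0\<^sub>v n = 0\<^sub>v n" proof -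
        have "0 \<cdot>\<^sub>v unit_vec n j = (0\<^sub>v n :: complex vec)" by (intro eq_vecI) auto
        thus ?thesis using eq \<open>y $ 0 = 0\<close> by metis
      qed
      hence "A *\<^sub>v x = 0\<^sub>v n" using A x by simp
      hence "x = 0\<^sub>v m" using injmD[OF iA A x] by auto
      moreover have "y = 0\<^sub>v 1" using \<open>y $ 0 = 0\<close> y by (intro eq_vecI) auto
      ultimately have "v = 0\<^sub>v (m+1)" using vxy by (intro eq_vecI) auto
      thus False using v(3) by auto
    qed
    have "A *\<^sub>v x = - ((y $ 0) \<cdot>\<^sub>v unit_vec n j)"
    proof -
      have "A *\<^sub>v x = A *\<^sub>v x + (y $ 0) \<cdot>\<^sub>v unit_vec n j - (y $ 0) \<cdot>\<^sub>v unit_vec n j"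
        using A x by auto
      also have "\<dots> = - ((y $ 0) \<cdot>\<^sub>v unit_vec n j)" unfolding eq by auto
      finally show ?thesis .
    qed
    hence "A *\<^sub>v ((- 1 / y $ 0) \<cdot>\<^sub>v x) = unit_vec n j"
      using A x c by (auto simp: mult_mat_vec)
    thus "\<exists>y \<in> carrier_vec m. A *\<^sub>v y = unit_vec n j" using x by (intro bexI[of _ "(- 1 / y $ 0) \<cdot>\<^sub>v x"]) auto
  qed
  then obtain yf where yf: "\<And>j. j < n \<Longrightarrow> yf j \<in> carrier_vec m \<and> A *\<^sub>v yf j = unit_vec n j"
    by metis
  define C where "C = mat m n (\<lambda>(i,j). yf j $ i)"
  have C: "C \<in> carrier_mat m n" unfolding C_def by auto
  have colC: "\<And>j. j < n \<Longrightarrow> col C j = yf j"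
  proof -
    fix j assume j: "j < n"
    have "yf j \<in> carrier_vec m" using yf[OF j] by auto
    thus "col C j = yf j" unfolding C_def using j by (intro eq_vecI) auto
  qed
  have AC: "A * C = 1\<^sub>m n"
  proof (rule eq_matI)
    fix i j assume i: "i < dim_row (1\<^sub>m n)" and j: "j < dim_col (1\<^sub>m n)"
    hence "(A * C) $$ (i,j) = (A *\<^sub>v yf j) $ i" using A C colC by auto
    thus "(A * C) $$ (i,j) = 1\<^sub>m n $$ (i,j)" using yf i j by auto
  qed (insert A C, auto)
  obtain d where d: "d \<in> carrier_vec n" "d \<noteq> 0\<^sub>v n" "C *\<^sub>v d = 0\<^sub>v m"
    using more_unknowns[OF C mn] by auto
  have "d = (A * C) *\<^sub>v d" using AC d by auto
  also have "\<dots> = A *\<^sub>v (C *\<^sub>v d)" using A C d by auto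
  also have "\<dots> = 0\<^sub>v n" using d A by auto
  finally show False using d by auto
qed

lemma extend_basis_aux:
  "A \<in> carrier_mat n m \<Longrightarrow> injm A \<Longrightarrow> n - m = k \<Longrightarrow> \<exists>B \<in> carrier_mat n (n - m). injm (appc A B)"
proof (induction k arbitrary: A m)
  case 0
  have mn: "m \<le> n" using injm_le 0 by auto
  have B: "0\<^sub>m n 0 \<in> carrier_mat n (n - m)" using 0 mn by auto
  have "appc A (0\<^sub>m n 0) = A" using 0 by (intro eq_matI) (auto simp: appc_index)
  thus ?case using B 0 by metis
next
  case (Suc k)
  hence mn: "m < n" by auto
  obtain j where j: "j < n" "injm (appc A (ecol n j))" using extend_step[OF Suc(2,3) mn] by auto
  have A': "appc A (ecol n j) \<in> carrier_mat n (m+1)" using appc_carrier[OF Suc(2) ecol_carrier] by simp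
  obtain B' where B': "B' \<in> carrier_mat n (n - (m+1))" "injm (appc (appc A (ecol n j)) B')"
    using Suc.IH[OF A' j(2)] Suc(4) by (metis Suc_eq_plus1 diff_Suc_eq_diff_pred diff_Suc_1 diff_diff_left)
  have "appc (appc A (ecol n j)) B' = appc A (appc (ecol n j) B')"
    by (rule appc_assoc[OF Suc(2) ecol_carrier B'(1)])
  moreover have "appc (ecol n j) B' \<in> carrier_mat n (n - m)" using B'(1) mn
    using appc_carrier[OF ecol_carrier B'(1)] by (metis Suc_diff_Suc Suc_eq_plus1 add.commute add_Suc_shift plus_1_eq_Suc)
  ultimately show ?case using B'(2) by metis
qed

lemma extend_basis:
  assumes "A \<in> carrier_mat n m" "injm A" shows "\<exists>B \<in> carrier_mat n (n - m). injm (appc A B)"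
  using extend_basis_aux[OF assms] by auto

lemma dual_basis:
  assumes W: "W \<in> carrier_mat n k" and iW: "injm W"
  shows "\<exists>D \<in> carrier_mat k n. D * W = 1\<^sub>m k"
proof -
  have kn: "k \<le> n" using injm_le[OF W iW] .
  obtain B where B: "B \<in> carrier_mat n (n - k)" "injm (appc W B)" using extend_basis[OF W iW] by auto
  have S: "appc W B \<in> carrier_mat n n" using appc_carrier[OF W B(1)] kn by simp
  obtain T where T: "T \<in> carrier_mat n n" "T * appc W B = 1\<^sub>m n" using injm_square_inv[OF S B(2)] by auto
  define D where "D = mat k n (\<lambda>(i,j). T $$ (i,j))"
  have D: "D \<in> carrier_mat k n" unfolding D_def by auto
  have "D * W = 1\<^sub>m k"
  proof (rule eq_matI)
    fix i j assume i: "i < dim_row (1\<^sub>m k)" and j: "j < dim_col (1\<^sub>m k)"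
    hence ij: "i < k" "j < k" by auto
    have rD: "row D i = row T i" using ij kn T by (intro eq_vecI) (auto simp: D_def)
    have cW: "col W j = col (appc W B) j" using col_appc[OF W B(1), of j] ij kn by auto
    have "(D * W) $$ (i,j) = row T i \<bullet> col (appc W B) j" using ij D W rD cW by auto
    also have "\<dots> = (T * appc W B) $$ (i,j)" using ij kn T S by (subst index_mult_mat) auto
    finally show "(D * W) $$ (i,j) = 1\<^sub>m k $$ (i,j)" using T(2) ij kn by auto
  qed (insert D W, auto)
  thus ?thesis using D by auto
qed



lemma sum_two: assumes "finite S" "a \<in> S" "b \<in> S" "a \<noteq> b" "\<And>i. i \<in> S \<Longrightarrow> i \<noteq> a \<Longrightarrow> i \<noteq> b \<Longrightarrow> f i = 0"
  shows "sum f S = f a + f b"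
proof -
  have "sum f S = sum f {a,b}" using assms by (intro sum.mono_neutral_right) auto
  thus ?thesis using assms by auto
qed

lemma sum_one: assumes "finite S" "a \<in> S" "\<And>i. i \<in> S \<Longrightarrow> i \<noteq> a \<Longrightarrow> f i = 0"
  shows "sum f S = f a"
proof -
  have "sum f S = sum f {a}" using assms by (intro sum.mono_neutral_right) auto
  thus ?thesis using assms by auto
qed

lemma bil_entry:
  fixes X G :: "complex mat"
  assumes X: "X \<in> carrier_mat d m" and G: "G \<in> carrier_mat d d" and ab: "a < m" "b < m"
  shows "(transpose_mat X * G * X) $$ (a,b) = col X a \<bullet> (G *\<^sub>v col X b)"
proof -
  have "transpose_mat X * G * X = transpose_mat X * (G * X)" using X G by (intro assoc_mult_mat) auto
  moreover have "(transpose_mat X * (G * X)) $$ (a,b) = row (transpose_mat X) a \<bullet> col (G * X) b"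
    using X G ab by (intro index_mult_mat) auto
  moreover have "row (transpose_mat X) a = col X a" using X ab by auto
  moreover have "col (G * X) b = G *\<^sub>v col X b" using X G ab by auto
  ultimately show ?thesis by simp
qed

lemma bil_transfer:
  fixes R G :: "complex mat"
  assumes R: "R \<in> carrier_mat d m" and G: "G \<in> carrier_mat d d" and x: "x \<in> carrier_vec m" and y: "y \<in> carrier_vec m"
  shows "(R *\<^sub>v x) \<bullet> (G *\<^sub>v (R *\<^sub>v y)) = x \<bullet> ((transpose_mat R * G * R) *\<^sub>v y)"
proof -
  have c1: "G *\<^sub>v (R *\<^sub>v y) \<in> carrier_vec d" using G R y by auto
  have "(R *\<^sub>v x) \<bullet> (G *\<^sub>v (R *\<^sub>v y)) = (G *\<^sub>v (R *\<^sub>v y)) \<bullet> (R *\<^sub>v x)"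
    by (rule comm_scalar_prod[OF _ c1], insert R x, auto)
  also have "\<dots> = (transpose_mat R *\<^sub>v (G *\<^sub>v (R *\<^sub>v y))) \<bullet> x"
    by (rule transpose_vec_mult_scalar[OF R x c1, symmetric])
  also have "\<dots> = x \<bullet> (transpose_mat R *\<^sub>v (G *\<^sub>v (R *\<^sub>v y)))"
    by (rule comm_scalar_prod[OF _ x], insert R G y, auto)
  also have "transpose_mat R *\<^sub>v (G *\<^sub>v (R *\<^sub>v y)) = (transpose_mat R * G * R) *\<^sub>v y"
  proof -
    have "(transpose_mat R * G * R) *\<^sub>v y = (transpose_mat R * G) *\<^sub>v (R *\<^sub>v y)"
      using R G y by (intro assoc_mult_mat_vec) auto
    also have "\<dots> = transpose_mat R *\<^sub>v (G *\<^sub>v (R *\<^sub>v y))"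
      using R G y by (intro assoc_mult_mat_vec) auto
    finally show ?thesis by simp
  qed
  finally show ?thesis .
qed

lemma bil_swap:
  fixes G :: "complex mat"
  assumes G: "G \<in> carrier_mat d d" and sk: "transpose_mat G = G \<or> transpose_mat G = - G"
    and x: "x \<in> carrier_vec d" and y: "y \<in> carrier_vec d" and z: "x \<bullet> (G *\<^sub>v y) = 0"
  shows "y \<bullet> (G *\<^sub>v x) = 0"
proof -
  have "x \<bullet> (G *\<^sub>v y) = (transpose_mat G *\<^sub>v x) \<bullet> y"
    by (rule transpose_vec_mult_scalar[OF G y x, symmetric])
  also have "\<dots> = y \<bullet> (transpose_mat G *\<^sub>v x)"
    by (rule comm_scalar_prod[OF _ y], insert G x, auto)
  finally have e: "y \<bullet> (transpose_mat G *\<^sub>v x) = 0" using z by simp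
  show ?thesis
  proof (cases "transpose_mat G = G")
    case True thus ?thesis using e by simp
  next
    case False
    hence "transpose_mat G = - G" using sk by auto
    hence "y \<bullet> (- (G *\<^sub>v x)) = 0" using e G x by simp
    thus ?thesis using G x y by simp
  qed
qed

definition colv :: "complex vec \<Rightarrow> complex mat" where
  "colv v = mat (dim_vec v) 1 (\<lambda>(i,_). v $ i)"

lemma colv_carrier[simp]: "v \<in> carrier_vec d \<Longrightarrow> colv v \<in> carrier_mat d 1" unfolding colv_def by auto

lemma colv_mult: assumes v: "v \<in> carrier_vec d" and y: "y \<in> carrier_vec 1"
  shows "colv v *\<^sub>v y = (y $ 0) \<cdot>\<^sub>v v"
proof (rule eq_vecI)
  fix i assume "i < dim_vec (y $ 0 \<cdot>\<^sub>v v)" hence i: "i < d" using v by simp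
  have "(colv v *\<^sub>v y) $ i = row (colv v) i \<bullet> y" using i v by (simp add: colv_def)
  also have "\<dots> = (\<Sum>t<1. row (colv v) i $ t * y $ t)"
    unfolding scalar_prod_def using y by (simp add: lessThan_atLeast0)
  also have "\<dots> = v $ i * y $ 0" using i v by (simp add: colv_def)
  finally show "(colv v *\<^sub>v y) $ i = (y $ 0 \<cdot>\<^sub>v v) $ i" using i v by auto
qed (insert v, simp add: colv_def)

lemma col_colv: "v \<in> carrier_vec d \<Longrightarrow> col (colv v) 0 = v"
  unfolding colv_def by (intro eq_vecI) auto



lemma iso_vec:
  fixes G :: "complex mat"
  assumes G: "G \<in> carrier_mat d d" and sk: "transpose_mat G = G \<or> transpose_mat G = - G" and d2: "2 \<le> d"
  shows "\<exists>v j. v \<in> carrier_vec d \<and> j < d \<and> v $ j \<noteq> 0 \<and> v \<bullet> (G *\<^sub>v v) = 0"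
proof -
  define w where "w \<alpha> \<beta> = vec d (\<lambda>i. if i = 0 then \<alpha> else if i = 1 then \<beta> else (0::complex))" for \<alpha> \<beta>
  have wc: "w \<alpha> \<beta> \<in> carrier_vec d" for \<alpha> \<beta> unfolding w_def by auto
  have Gw: "(G *\<^sub>v w \<alpha> \<beta>) $ i = G $$ (i,0) * \<alpha> + G $$ (i,1) * \<beta>" if i: "i < d" for i \<alpha> \<beta>
  proof -
    have "(G *\<^sub>v w \<alpha> \<beta>) $ i = (\<Sum>b\<in>{0..<d}. G $$ (i,b) * w \<alpha> \<beta> $ b)"
      using G i wc by (auto simp: w_def scalar_prod_def)
    also have "\<dots> = G $$ (i,0) * w \<alpha> \<beta> $ 0 + G $$ (i,1) * w \<alpha> \<beta> $ 1"
      by (rule sum_two, insert d2, auto simp: w_def)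
    finally show ?thesis using d2 by (simp add: w_def)
  qed
  have wGw: "w \<alpha> \<beta> \<bullet> (G *\<^sub>v w \<alpha> \<beta>) = \<alpha> * (G $$ (0,0) * \<alpha> + G $$ (0,1) * \<beta>) + \<beta> * (G $$ (1,0) * \<alpha> + G $$ (1,1) * \<beta>)" for \<alpha> \<beta>
  proof -
    have "w \<alpha> \<beta> \<bullet> (G *\<^sub>v w \<alpha> \<beta>) = (\<Sum>i\<in>{0..<d}. w \<alpha> \<beta> $ i * (G *\<^sub>v w \<alpha> \<beta>) $ i)"
      using G unfolding scalar_prod_def by (simp add: w_def)
    also have "\<dots> = w \<alpha> \<beta> $ 0 * (G *\<^sub>v w \<alpha> \<beta>) $ 0 + w \<alpha> \<beta> $ 1 * (G *\<^sub>v w \<alpha> \<beta>) $ 1"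
      by (rule sum_two, insert d2, auto simp: w_def)
    finally show ?thesis using d2 Gw by (simp add: w_def)
  qed
  have w0: "w \<alpha> \<beta> $ 0 = \<alpha>" and w1: "w \<alpha> \<beta> $ 1 = \<beta>" for \<alpha> \<beta> using d2 by (auto simp: w_def)
  show ?thesis
  proof (cases "G $$ (0,0) = 0")
    case True
    have "w 1 0 \<bullet> (G *\<^sub>v w 1 0) = 0" using True wGw by simp
    thus ?thesis using wc w0 d2 by (intro exI[of _ "w 1 0"] exI[of _ 0]) auto
  next
    case F0: False
    show ?thesis
    proof (cases "G $$ (1,1) = 0")
      case True
      have "w 0 1 \<bullet> (G *\<^sub>v w 0 1) = 0" using True wGw by simp
      thus ?thesis using wc w1 d2 by (intro exI[of _ "w 0 1"] exI[of _ 1]) auto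
    next
      case F1: False
      have symG: "transpose_mat G = G"
      proof (rule ccontr)
        assume "transpose_mat G \<noteq> G"
        hence "transpose_mat G = - G" using sk by auto
        hence "transpose_mat G $$ (0,0) = (- G) $$ (0,0)" by simp
        hence "G $$ (0,0) = - G $$ (0,0)" using G d2 by simp
        thus False using F0 by simp
      qed
      have g10: "G $$ (1,0) = G $$ (0,1)"
      proof -
        have "transpose_mat G $$ (1,0) = G $$ (1,0)" using symG by simp
        thus ?thesis using G d2 by simp
      qed
      define a where "a = G $$ (0,0)"
      define b where "b = G $$ (0,1)"
      define c where "c = G $$ (1,1)"
      define s where "s = csqrt (b^2 - a * c)"
      define t where "t = (- b + s) / c"
      have c0: "c \<noteq> 0" using F1 c_def by simp
      have s2: "s^2 = b^2 - a * c" unfolding s_def by simp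
      have ct: "c * t = s - b" unfolding t_def using c0 by (simp add: field_simps)
      have "c * (a + 2 * b * t + c * t * t) = a * c + 2 * b * (c * t) + (c * t) * (c * t)"
        by (simp add: algebra_simps)
      also have "\<dots> = a * c + s^2 - b^2" unfolding ct by (simp add: algebra_simps power2_eq_square)
      also have "\<dots> = 0" using s2 by simp
      finally have "a + 2 * b * t + c * t * t = 0" using c0 by simp
      hence "w 1 t \<bullet> (G *\<^sub>v w 1 t) = 0" using wGw[of 1 t] g10 unfolding a_def b_def c_def
        by (simp add: algebra_simps)
      thus ?thesis using wc w0 d2 by (intro exI[of _ "w 1 t"] exI[of _ 0]) auto
    qed
  qed
qed



lemma iso_choose_k:
  fixes r v :: "complex vec"
  assumes r: "r \<in> carrier_vec d" and v: "v \<in> carrier_vec d" and j: "j < d" "v $ j \<noteq> 0"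
    and rv: "r \<bullet> v = 0" and d2: "2 \<le> d"
  shows "\<exists>k<d. k \<noteq> j \<and> (\<forall>i<d. r $ i = (r $ i / r $ k) * r $ k)"
proof (cases "\<exists>k<d. k \<noteq> j \<and> r $ k \<noteq> 0")
  case True
  then obtain k where "k < d" "k \<noteq> j" "r $ k \<noteq> 0" by auto
  thus ?thesis by (intro exI[of _ k]) auto
next
  case False
  hence z: "\<And>i. i < d \<Longrightarrow> i \<noteq> j \<Longrightarrow> r $ i = 0" by auto
  have "r \<bullet> v = (\<Sum>i\<in>{0..<d}. r $ i * v $ i)" using r v unfolding scalar_prod_def by auto
  also have "\<dots> = r $ j * v $ j" by (rule sum_one, insert j z, auto)
  finally have "r $ j = 0" using rv j by simp
  hence z2: "\<And>i. i < d \<Longrightarrow> r $ i = 0" using z by metis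
  define k where "k = (if j = 0 then 1 else 0::nat)"
  have "k < d" "k \<noteq> j" using d2 by (auto simp: k_def)
  thus ?thesis using z2 by (intro exI[of _ k]) auto
qed

lemma iso_sigma:
  fixes j k d :: nat
  assumes "j < d" "k < d" "j \<noteq> k"
  defines "\<sigma> \<equiv> \<lambda>t. if t < min j k then t else if t + 1 < max j k then t + 1 else t + 2"
  shows "\<And>t. t < d - 2 \<Longrightarrow> \<sigma> t < d \<and> \<sigma> t \<noteq> j \<and> \<sigma> t \<noteq> k"
    and "\<And>t t'. \<sigma> t = \<sigma> t' \<Longrightarrow> t = t'"
  using assms unfolding \<sigma>_def by (auto split: if_splits)

lemma iso:
  fixes G :: "complex mat"
  shows "G \<in> carrier_mat d d \<Longrightarrow> (transpose_mat G = G \<or> transpose_mat G = - G) \<Longrightarrow>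
    \<exists>Q \<in> carrier_mat d (d div 2). injm Q \<and> transpose_mat Q * G * Q = 0\<^sub>m (d div 2) (d div 2)"
proof (induction d arbitrary: G rule: less_induct)
  case (less d)
  note G = less(2) and sk = less(3)
  show ?case
  proof (cases "d < 2")
    case True
    hence d0: "d div 2 = 0" by auto
    let ?Q = "0\<^sub>m d 0 :: complex mat"
    have "injm ?Q" by (rule injmI[of _ d 0]) (auto intro!: eq_vecI)
    moreover have "transpose_mat ?Q * G * ?Q = 0\<^sub>m 0 0" by (rule eq_matI) (use G in auto)
    ultimately show ?thesis using d0 by auto
  next
    case False
    hence d2: "2 \<le> d" by auto
    obtain v j where v: "v \<in> carrier_vec d" "j < d" "v $ j \<noteq> 0" "v \<bullet> (G *\<^sub>v v) = 0"
      using iso_vec[OF G sk d2] by auto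
    define r where "r = transpose_mat G *\<^sub>v v"
    have r: "r \<in> carrier_vec d" unfolding r_def using G v by auto
    have rx: "\<And>x. x \<in> carrier_vec d \<Longrightarrow> r \<bullet> x = v \<bullet> (G *\<^sub>v x)"
      unfolding r_def using transpose_vec_mult_scalar[OF G _ v(1)] by auto
    have rv: "r \<bullet> v = 0" using rx[OF v(1)] v(4) by simp
    obtain k where k: "k < d" "k \<noteq> j" "\<And>i. i < d \<Longrightarrow> r $ i = (r $ i / r $ k) * r $ k"
      using iso_choose_k[OF r v(1) v(2) v(3) rv d2] by auto
    define \<sigma> where "\<sigma> = (\<lambda>t. if t < min j k then t else if t + 1 < max j k then t + 1 else t + 2)"
    have \<sigma>: "\<And>t. t < d - 2 \<Longrightarrow> \<sigma> t < d \<and> \<sigma> t \<noteq> j \<and> \<sigma> t \<noteq> k"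
      and \<sigma>inj: "\<And>t t'. \<sigma> t = \<sigma> t' \<Longrightarrow> t = t'"
      using iso_sigma[OF v(2) k(1) k(2)[symmetric]] unfolding \<sigma>_def by blast+
    define R where "R = mat d (d-2) (\<lambda>(i,t). if i = \<sigma> t then 1 else if i = k then - (r $ (\<sigma> t) / r $ k) else (0::complex))"
    have Rc: "R \<in> carrier_mat d (d-2)" unfolding R_def by auto
    have rR: "r \<bullet> col R t = 0" if t: "t < d - 2" for t
    proof -
      have "r \<bullet> col R t = (\<Sum>i\<in>{0..<d}. r $ i * col R t $ i)" using r Rc unfolding scalar_prod_def by auto
      also have "\<dots> = r $ (\<sigma> t) * col R t $ (\<sigma> t) + r $ k * col R t $ k"
        by (rule sum_two, insert \<sigma>[OF t] k t, auto simp: R_def)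
      also have "\<dots> = r $ (\<sigma> t) - r $ k * (r $ (\<sigma> t) / r $ k)"
        using \<sigma>[OF t] k t by (auto simp: R_def)
      also have "\<dots> = 0" using k(3)[of "\<sigma> t"] \<sigma>[OF t] by (simp add: algebra_simps)
      finally show ?thesis .
    qed
    have RTr: "transpose_mat R *\<^sub>v r = 0\<^sub>v (d-2)"
    proof (rule eq_vecI)
      fix t assume "t < dim_vec (0\<^sub>v (d - 2))" hence t: "t < d - 2" by simp
      have "(transpose_mat R *\<^sub>v r) $ t = col R t \<bullet> r" using t Rc by auto
      also have "\<dots> = r \<bullet> col R t" by (rule comm_scalar_prod[OF _ r], insert Rc, auto)
      finally show "(transpose_mat R *\<^sub>v r) $ t = 0\<^sub>v (d - 2) $ t" using rR[OF t] t by simp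
    qed (insert Rc, auto)
    have Rinj: "c = 0 \<and> x = 0\<^sub>v (d-2)" if x: "x \<in> carrier_vec (d-2)" and eq: "c \<cdot>\<^sub>v v + R *\<^sub>v x = 0\<^sub>v d" for c x
    proof -
      have Rxj: "(R *\<^sub>v x) $ j = 0"
      proof -
        have "(R *\<^sub>v x) $ j = (\<Sum>t\<in>{0..<d-2}. R $$ (j,t) * x $ t)"
          using Rc x v(2) by (auto simp: scalar_prod_def)
        also have "\<dots> = 0"
        proof (rule sum.neutral, intro ballI)
          fix t assume "t \<in> {0..<d-2}" hence t: "t < d - 2" by simp
          have "\<sigma> t \<noteq> j" using \<sigma>[OF t] by simp
          hence "R $$ (j,t) = 0" using k(2) t v(2) by (simp add: R_def)
          thus "R $$ (j,t) * x $ t = 0" by simp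
        qed
        finally show ?thesis .
      qed
      have "(c \<cdot>\<^sub>v v + R *\<^sub>v x) $ j = 0" using eq v(2) by simp
      hence "c * v $ j = 0" using Rxj v Rc x by simp
      hence c0: "c = 0" using v(3) by simp
      have Rx0: "R *\<^sub>v x = 0\<^sub>v d"
      proof -
        have "0 \<cdot>\<^sub>v v = 0\<^sub>v d" using v by (intro eq_vecI) auto
        thus ?thesis using eq c0 Rc x by simp
      qed
      have "x = 0\<^sub>v (d-2)"
      proof (rule eq_vecI)
        fix t0 assume "t0 < dim_vec (0\<^sub>v (d - 2))" hence t0: "t0 < d - 2" by simp
        have "(R *\<^sub>v x) $ (\<sigma> t0) = (\<Sum>t\<in>{0..<d-2}. R $$ (\<sigma> t0,t) * x $ t)"
          using Rc x \<sigma>[OF t0] by (auto simp: scalar_prod_def)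
        also have "\<dots> = R $$ (\<sigma> t0, t0) * x $ t0"
          by (rule sum_one, insert \<sigma> \<sigma>inj t0, auto simp: R_def)
        also have "\<dots> = x $ t0" using \<sigma>[OF t0] t0 by (simp add: R_def)
        finally show "x $ t0 = 0\<^sub>v (d - 2) $ t0" using Rx0 \<sigma>[OF t0] t0 by simp
      qed (use x in auto)
      thus ?thesis using c0 by simp
    qed
    define G2 where "G2 = transpose_mat R * G * R"
    have G2c: "G2 \<in> carrier_mat (d-2) (d-2)" unfolding G2_def using Rc G by auto
    have tG2: "transpose_mat G2 = transpose_mat R * transpose_mat G * R"
    proof -
      have "transpose_mat G2 = transpose_mat R * transpose_mat (transpose_mat R * G)"
        unfolding G2_def using Rc G by (subst transpose_mult[of _ "d-2" d]) auto
      also have "transpose_mat (transpose_mat R * G) = transpose_mat G * R"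
        using Rc G by (subst transpose_mult[of _ "d-2" d]) auto
      finally show ?thesis using Rc G by (simp add: assoc_mult_mat[of _ "d-2" d _ d _ "d-2"])
    qed
    have sk2: "transpose_mat G2 = G2 \<or> transpose_mat G2 = - G2"
    proof (cases "transpose_mat G = G")
      case True thus ?thesis using tG2 G2_def by simp
    next
      case False
      hence "transpose_mat G = - G" using sk by auto
      hence "transpose_mat G2 = transpose_mat R * (- G) * R" using tG2 by simp
      also have "\<dots> = - G2" unfolding G2_def using Rc G
        by (simp add: mult_smult_distrib)
      finally show ?thesis by simp
    qed
    have dlt: "d - 2 < d" using d2 by simp
    obtain Q2 where Q2: "Q2 \<in> carrier_mat (d-2) ((d-2) div 2)" "injm Q2"
        "transpose_mat Q2 * G2 * Q2 = 0\<^sub>m ((d-2) div 2) ((d-2) div 2)"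
      using less.IH[OF dlt G2c sk2] by auto
    define m where "m = (d-2) div 2"
    have dm: "d div 2 = 1 + m" unfolding m_def using d2 by simp
    have RQ2: "R * Q2 \<in> carrier_mat d m" using Rc Q2 unfolding m_def by auto
    define Q where "Q = appc (colv v) (R * Q2)"
    have Qc: "Q \<in> carrier_mat d (d div 2)" unfolding Q_def dm using appc_carrier[OF colv_carrier[OF v(1)] RQ2] .
    have colQ: "col Q a = (if a = 0 then v else R *\<^sub>v col Q2 (a - 1))" if a: "a < d div 2" for a
    proof -
      have "col Q a = (if a < 1 then col (colv v) a else col (R * Q2) (a - 1))"
        unfolding Q_def by (rule col_appc[OF colv_carrier[OF v(1)] RQ2], insert a dm, auto)
      thus ?thesis using col_colv[OF v(1)] Rc Q2 a dm unfolding m_def by auto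
    qed
    have injQ: "injm Q"
    proof (rule injmI[OF Qc])
      fix x assume x: "x \<in> carrier_vec (d div 2)" and Qx: "Q *\<^sub>v x = 0\<^sub>v d"
      define x1 where "x1 = vec_first x 1"
      define x2 where "x2 = vec_last x m"
      have x1: "x1 \<in> carrier_vec 1" and x2: "x2 \<in> carrier_vec m" unfolding x1_def x2_def by auto
      have xx: "x = x1 @\<^sub>v x2" unfolding x1_def x2_def using x dm by simp
      have "Q *\<^sub>v x = colv v *\<^sub>v x1 + (R * Q2) *\<^sub>v x2"
        unfolding Q_def xx by (rule appc_mult_vec_app[OF colv_carrier[OF v(1)] RQ2 x1 x2])
      also have "\<dots> = (x1 $ 0) \<cdot>\<^sub>v v + R *\<^sub>v (Q2 *\<^sub>v x2)"
        using colv_mult[OF v(1) x1] Rc Q2 x2 unfolding m_def by auto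
      finally have "(x1 $ 0) \<cdot>\<^sub>v v + R *\<^sub>v (Q2 *\<^sub>v x2) = 0\<^sub>v d" using Qx by simp
      from Rinj[OF _ this] have c: "x1 $ 0 = 0" "Q2 *\<^sub>v x2 = 0\<^sub>v (d-2)" using Q2 x2 unfolding m_def by auto
      have "x2 = 0\<^sub>v m" using injmD[OF Q2(2) Q2(1)] x2 c(2) unfolding m_def by auto
      moreover have "x1 = 0\<^sub>v 1" using c(1) x1 by (intro eq_vecI) auto
      ultimately show "x = 0\<^sub>v (d div 2)" using xx dm by (intro eq_vecI) auto
    qed
    have zero01: "v \<bullet> (G *\<^sub>v (R *\<^sub>v y)) = 0" if y: "y \<in> carrier_vec (d-2)" for y
    proof -
      have "v \<bullet> (G *\<^sub>v (R *\<^sub>v y)) = r \<bullet> (R *\<^sub>v y)" using rx[of "R *\<^sub>v y"] Rc y by auto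
      also have "\<dots> = (transpose_mat R *\<^sub>v r) \<bullet> y" by (rule transpose_vec_mult_scalar[OF Rc y r, symmetric])
      also have "\<dots> = 0" using RTr y by simp
      finally show ?thesis .
    qed
    have "transpose_mat Q * G * Q = 0\<^sub>m (d div 2) (d div 2)"
    proof (rule eq_matI)
      fix a b assume "a < dim_row (0\<^sub>m (d div 2) (d div 2))" "b < dim_col (0\<^sub>m (d div 2) (d div 2))"
      hence ab: "a < d div 2" "b < d div 2" by auto
      have e: "(transpose_mat Q * G * Q) $$ (a,b) = col Q a \<bullet> (G *\<^sub>v col Q b)"
        by (rule bil_entry[OF Qc G ab])
      have qa: "a \<noteq> 0 \<Longrightarrow> col Q2 (a-1) \<in> carrier_vec (d-2)" and qb: "b \<noteq> 0 \<Longrightarrow> col Q2 (b-1) \<in> carrier_vec (d-2)"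
        using Q2(1) by (auto intro!: carrier_vecI)
      have "col Q a \<bullet> (G *\<^sub>v col Q b) = 0"
      proof (cases "a = 0")
        case a0: True
        show ?thesis
        proof (cases "b = 0")
          case True thus ?thesis using a0 colQ ab v by simp
        next
          case False thus ?thesis using a0 colQ ab zero01[OF qb] by simp
        qed
      next
        case a0: False
        show ?thesis
        proof (cases "b = 0")
          case True
          have "v \<bullet> (G *\<^sub>v (R *\<^sub>v col Q2 (a-1))) = 0" using zero01[OF qa[OF a0]] .
          from bil_swap[OF G sk v(1) _ this] have "(R *\<^sub>v col Q2 (a-1)) \<bullet> (G *\<^sub>v v) = 0"
            using Rc qa[OF a0] by auto
          thus ?thesis using True a0 colQ ab by simp
        next
          case False
          have "(R *\<^sub>v col Q2 (a-1)) \<bullet> (G *\<^sub>v (R *\<^sub>v col Q2 (b-1))) = col Q2 (a-1) \<bullet> (G2 *\<^sub>v col Q2 (b-1))"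
            unfolding G2_def by (rule bil_transfer[OF Rc G qa[OF a0] qb[OF False]])
          also have "\<dots> = (transpose_mat Q2 * G2 * Q2) $$ (a-1, b-1)"
            by (rule bil_entry[OF Q2(1) G2c, symmetric], insert ab a0 False d2, auto)
          also have "\<dots> = 0" using Q2(3) ab a0 False d2 by auto
          finally show ?thesis using False a0 colQ ab by simp
        qed
      qed
      thus "(transpose_mat Q * G * Q) $$ (a,b) = 0\<^sub>m (d div 2) (d div 2) $$ (a,b)" using e ab by simp
    qed (insert Qc G, auto)
    thus ?thesis using Qc injQ by auto
  qed
qed



definition bigm :: "nat \<Rightarrow> nat \<Rightarrow> (nat \<Rightarrow> complex mat) \<Rightarrow> nat \<Rightarrow> complex mat" where
  "bigm N m Ys s = mat N (s * m) (\<lambda>(r,c). Ys (c div m) $$ (r, c mod m))"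

definition blk :: "nat \<Rightarrow> nat \<Rightarrow> complex vec \<Rightarrow> complex vec" where
  "blk m i y = vec m (\<lambda>a. y $ (i * m + a))"

lemma bigm_carrier[simp]: "bigm N m Ys s \<in> carrier_mat N (s * m)" unfolding bigm_def by auto

lemma blk_carrier[simp]: "blk m i y \<in> carrier_vec m" unfolding blk_def by auto

lemma sum_group: fixes f :: "nat \<Rightarrow> 'a::comm_monoid_add" shows "(\<Sum>c\<in>{0..<s*m}. f c) = (\<Sum>i\<in>{0..<s}. \<Sum>a\<in>{0..<m}. f (i * m + a))"
proof -
  have "(\<Sum>c\<in>{0..<s*m}. f c) = (\<Sum>i<s. sum f {i * m..<i * m + m})"
    using sum.nat_group[of f m s] by (simp add: lessThan_atLeast0)
  also have "\<dots> = (\<Sum>i<s. \<Sum>a\<in>{0..<m}. f (i * m + a))"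
  proof (rule sum.cong[OF refl])
    fix i
    have "sum f {0 + i * m..<m + i * m} = (\<Sum>a\<in>{0..<m}. f (a + i * m))"
      by (rule sum.shift_bounds_nat_ivl)
    thus "sum f {i * m..<i * m + m} = (\<Sum>a\<in>{0..<m}. f (i * m + a))" by (simp add: add.commute)
  qed
  finally show ?thesis by (simp add: lessThan_atLeast0)
qed

lemma bigm_mult_vec:
  assumes Y: "\<And>i. i < s \<Longrightarrow> Ys i \<in> carrier_mat N m" and y: "y \<in> carrier_vec (s * m)"
  shows "bigm N m Ys s *\<^sub>v y = vec N (\<lambda>r. \<Sum>i\<in>{0..<s}. (Ys i *\<^sub>v blk m i y) $ r)"
proof (rule eq_vecI)
  fix r assume "r < dim_vec (vec N (\<lambda>r. \<Sum>i\<in>{0..<s}. (Ys i *\<^sub>v blk m i y) $ r))"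
  hence r: "r < N" by simp
  have "(bigm N m Ys s *\<^sub>v y) $ r = (\<Sum>c\<in>{0..<s*m}. Ys (c div m) $$ (r, c mod m) * y $ c)"
    using r y by (auto simp: bigm_def scalar_prod_def)
  also have "\<dots> = (\<Sum>i\<in>{0..<s}. \<Sum>a\<in>{0..<m}. Ys ((i*m+a) div m) $$ (r, (i*m+a) mod m) * y $ (i*m+a))"
    by (rule sum_group)
  also have "\<dots> = (\<Sum>i\<in>{0..<s}. (Ys i *\<^sub>v blk m i y) $ r)"
  proof (rule sum.cong[OF refl])
    fix i assume i: "i \<in> {0..<s}"
    have "(Ys i *\<^sub>v blk m i y) $ r = (\<Sum>a\<in>{0..<m}. Ys i $$ (r, a) * y $ (i*m+a))"
      using Y[of i] i r by (auto simp: scalar_prod_def blk_def)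
    also have "\<dots> = (\<Sum>a\<in>{0..<m}. Ys ((i*m+a) div m) $$ (r, (i*m+a) mod m) * y $ (i*m+a))"
      by (rule sum.cong[OF refl], auto)
    finally show "(\<Sum>a\<in>{0..<m}. Ys ((i*m+a) div m) $$ (r, (i*m+a) mod m) * y $ (i*m+a)) = (Ys i *\<^sub>v blk m i y) $ r" by simp
  qed
  finally show "(bigm N m Ys s *\<^sub>v y) $ r = vec N (\<lambda>r. \<Sum>i\<in>{0..<s}. (Ys i *\<^sub>v blk m i y) $ r) $ r" using r by simp
qed (simp add: bigm_def)

lemma col_bigm: assumes Y: "\<And>i. i < s \<Longrightarrow> Ys i \<in> carrier_mat N m" and i: "i < s" and a: "a < m"
  shows "col (bigm N m Ys s) (i * m + a) = col (Ys i) a"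
proof -
  have im: "i * m + a < s * m"
  proof -
    have "i * m + a < i * m + m" using a by simp
    also have "\<dots> = (i+1) * m" by simp
    also have "\<dots> \<le> s * m" using i by (intro mult_le_mono1) auto
    finally show ?thesis .
  qed
  show ?thesis using Y[OF i] a im by (intro eq_vecI) (auto simp: bigm_def)
qed

lemma congr_zero_entry:
  fixes X Q M :: "complex mat"
  assumes X: "X \<in> carrier_mat N a" and Q: "Q \<in> carrier_mat a b" and M: "M \<in> carrier_mat N N"
  shows "transpose_mat (X * Q) * M * (X * Q) = transpose_mat Q * (transpose_mat X * M * X) * Q"
proof (rule eq_matI)
  fix i j assume "i < dim_row (transpose_mat Q * (transpose_mat X * M * X) * Q)"
    "j < dim_col (transpose_mat Q * (transpose_mat X * M * X) * Q)"
  hence ij: "i < b" "j < b" using Q by auto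
  have XQ: "X * Q \<in> carrier_mat N b" using X Q by auto
  have G: "transpose_mat X * M * X \<in> carrier_mat a a" using X M by auto
  have "(transpose_mat (X * Q) * M * (X * Q)) $$ (i,j) = col (X*Q) i \<bullet> (M *\<^sub>v col (X*Q) j)"
    by (rule bil_entry[OF XQ M ij])
  also have "\<dots> = (X *\<^sub>v col Q i) \<bullet> (M *\<^sub>v (X *\<^sub>v col Q j))"
    using col_mult2[OF X Q ij(1)] col_mult2[OF X Q ij(2)] by simp
  also have "\<dots> = col Q i \<bullet> ((transpose_mat X * M * X) *\<^sub>v col Q j)"
    by (rule bil_transfer[OF X M], insert Q ij, auto intro!: carrier_vecI)
  also have "\<dots> = (transpose_mat Q * (transpose_mat X * M * X) * Q) $$ (i,j)"
    by (rule bil_entry[OF Q G ij, symmetric])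
  finally show "(transpose_mat (X * Q) * M * (X * Q)) $$ (i,j) = (transpose_mat Q * (transpose_mat X * M * X) * Q) $$ (i,j)" .
qed (insert X Q M, auto)

lemma transpose_congr:
  fixes X M :: "complex mat"
  assumes X: "X \<in> carrier_mat N a" and M: "M \<in> carrier_mat N N"
  shows "transpose_mat (transpose_mat X * M * X) = transpose_mat X * transpose_mat M * X"
proof -
  have "transpose_mat (transpose_mat X * M * X) = transpose_mat X * transpose_mat (transpose_mat X * M)"
    using X M by (subst transpose_mult[of _ a N]) auto
  also have "transpose_mat (transpose_mat X * M) = transpose_mat M * X"
    using X M by (subst transpose_mult[of _ a N]) auto
  finally show ?thesis using X M by (simp add: assoc_mult_mat[of _ a N _ N _ a])
qed

lemma sk_congr:
  fixes X M :: "complex mat"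
  assumes X: "X \<in> carrier_mat N a" and M: "M \<in> carrier_mat N N"
    and sk: "transpose_mat M = M \<or> transpose_mat M = - M"
  shows "transpose_mat (transpose_mat X * M * X) = transpose_mat X * M * X \<or>
         transpose_mat (transpose_mat X * M * X) = - (transpose_mat X * M * X)"
proof (cases "transpose_mat M = M")
  case True thus ?thesis using transpose_congr[OF X M] by simp
next
  case False
  hence "transpose_mat M = - M" using sk by auto
  hence "transpose_mat (transpose_mat X * M * X) = transpose_mat X * (- M) * X" using transpose_congr[OF X M] by simp
  also have "\<dots> = - (transpose_mat X * M * X)" using X M by (simp add: mult_smult_distrib)
  finally show ?thesis by simp
qed

lemma iterate:
  fixes P :: "complex mat" and Ms :: "nat \<Rightarrow> complex mat"
  assumes P: "P \<in> carrier_mat N (2^s * l)" and M: "\<And>i. i < s \<Longrightarrow> Ms i \<in> carrier_mat N N"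
    and sk: "\<And>i. i < s \<Longrightarrow> transpose_mat (Ms i) = Ms i \<or> transpose_mat (Ms i) = - Ms i"
  shows "t \<le> s \<Longrightarrow> \<exists>R \<in> carrier_mat (2^s * l) (2^(s-t) * l). injm R \<and>
     (\<forall>i<t. transpose_mat (P * R) * Ms i * (P * R) = 0\<^sub>m (2^(s-t) * l) (2^(s-t) * l))"
proof (induction t)
  case 0
  have "injm (1\<^sub>m (2^s * l))" by (rule injmI[of _ "2^s*l" "2^s*l"]) auto
  thus ?case by (intro bexI[of _ "1\<^sub>m (2^s * l)"]) auto
next
  case (Suc t)
  hence ts: "t < s" by simp
  obtain R where R: "R \<in> carrier_mat (2^s * l) (2^(s-t) * l)" "injm R"
    "\<forall>i<t. transpose_mat (P * R) * Ms i * (P * R) = 0\<^sub>m (2^(s-t) * l) (2^(s-t) * l)"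
    using Suc.IH ts by auto
  define d where "d = 2^(s-t) * l"
  have PR: "P * R \<in> carrier_mat N d" using P R unfolding d_def by auto
  define G where "G = transpose_mat (P * R) * Ms t * (P * R)"
  have Gc: "G \<in> carrier_mat d d" unfolding G_def using PR M[OF ts] by auto
  have skG: "transpose_mat G = G \<or> transpose_mat G = - G" unfolding G_def by (rule sk_congr[OF PR M[OF ts] sk[OF ts]])
  obtain Q where Q: "Q \<in> carrier_mat d (d div 2)" "injm Q" "transpose_mat Q * G * Q = 0\<^sub>m (d div 2) (d div 2)"
    using iso[OF Gc skG] by auto
  have dd: "d div 2 = 2^(s - Suc t) * l"
  proof -
    have "(2::nat)^(s-t) = 2 * 2^(s - Suc t)" using ts by (metis Suc_diff_Suc power_Suc)
    thus ?thesis unfolding d_def by simp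
  qed
  have Rd: "R \<in> carrier_mat (2^s * l) d" using R unfolding d_def by simp
  have RQ: "R * Q \<in> carrier_mat (2^s * l) (2^(s - Suc t) * l)" using Rd Q dd by auto
  have iRQ: "injm (R * Q)" by (rule injm_mult[OF Rd Q(1) R(2) Q(2)])
  have eq: "P * (R * Q) = (P * R) * Q" using P Rd Q by (simp add: assoc_mult_mat)
  have "\<forall>i<Suc t. transpose_mat (P * (R * Q)) * Ms i * (P * (R * Q)) = 0\<^sub>m (2^(s - Suc t) * l) (2^(s - Suc t) * l)"
  proof (intro allI impI)
    fix i assume i: "i < Suc t"
    have "transpose_mat (P * (R * Q)) * Ms i * (P * (R * Q)) = transpose_mat Q * (transpose_mat (P * R) * Ms i * (P * R)) * Q"
      unfolding eq by (rule congr_zero_entry[OF PR Q(1) M], insert i ts, auto)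
    also have "\<dots> = 0\<^sub>m (d div 2) (d div 2)"
    proof (cases "i < t")
      case True
      hence "transpose_mat (P * R) * Ms i * (P * R) = 0\<^sub>m d d" using R(3) unfolding d_def by auto
      thus ?thesis using Q(1) by simp
    next
      case False
      hence "i = t" using i by simp
      thus ?thesis using Q(3) unfolding G_def by simp
    qed
    finally show "transpose_mat (P * (R * Q)) * Ms i * (P * (R * Q)) = 0\<^sub>m (2^(s - Suc t) * l) (2^(s - Suc t) * l)"
      using dd by simp
  qed
  thus ?case using RQ iRQ by blast
qed



lemma zero_append: "0\<^sub>v (a + b) = (0\<^sub>v a @\<^sub>v 0\<^sub>v b :: complex vec)"
  by (intro eq_vecI) auto

lemma mat_vec_zero: "A \<in> carrier_mat n m \<Longrightarrow> A *\<^sub>v 0\<^sub>v m = (0\<^sub>v n :: complex vec)"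
  by (intro eq_vecI) auto

lemma det_invertible: assumes A: "A \<in> carrier_mat n n" and d: "det (A :: complex mat) \<noteq> 0"
  shows "invertible_mat A"
proof -
  from det_non_zero_imp_unit[OF A d, of "()"] obtain B where B: "B \<in> carrier_mat n n" "A * B = 1\<^sub>m n" "B * A = 1\<^sub>m n"
    unfolding Units_def ring_mat_def by auto
  show ?thesis unfolding invertible_mat_def inverts_mat_def square_mat.simps
    using A B by auto
qed

lemma final_g:
  fixes U :: "complex mat" and Ms :: "nat \<Rightarrow> complex mat"
  assumes U: "U \<in> carrier_mat N l" and iU: "injm U"
    and M: "\<And>i. i < s \<Longrightarrow> Ms i \<in> carrier_mat N N"
    and isoU: "\<And>i. i < s \<Longrightarrow> transpose_mat U * Ms i * U = 0\<^sub>m l l"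
    and iW: "injm (bigm N l (\<lambda>i. Ms i * U) s)"
  shows "\<exists>g \<in> carrier_mat N N. invertible_mat g \<and> (\<forall>i<s. \<forall>r<N. \<forall>c<l.
     (g * Ms i * transpose_mat g) $$ (r,c) = (if l \<le> r \<and> r < l + s * l \<and> r - l = i * l + c then 1 else 0))"
proof -
  define k where "k = s * l"
  define W where "W = bigm N l (\<lambda>i. Ms i * U) s"
  have Wc: "W \<in> carrier_mat N k" unfolding W_def k_def by simp
  have MU: "\<And>i. i < s \<Longrightarrow> Ms i * U \<in> carrier_mat N l" using M U by (meson mult_carrier_mat)
  have colW: "col W (i * l + c) = Ms i *\<^sub>v col U c" if "i < s" "c < l" for i c
    unfolding W_def using col_bigm[OF MU that] that M U by auto
  have colW': "\<exists>i c. i < s \<and> c < l \<and> col W c' = Ms i *\<^sub>v col U c" if c': "c' < k" for c'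
  proof -
    have l0: "0 < l" using c' unfolding k_def by (cases l) auto
    have "c' div l < s" using c' unfolding k_def by (simp add: less_mult_imp_div_less)
    moreover have "c' mod l < l" using l0 by simp
    moreover have "c' = (c' div l) * l + c' mod l" by simp
    ultimately show ?thesis using colW by metis
  qed
  obtain D where D: "D \<in> carrier_mat k N" "D * W = 1\<^sub>m k" using dual_basis[OF Wc iW[folded W_def]] by auto
  have DT: "transpose_mat D \<in> carrier_mat N k" using D by simp
  have WTU: "transpose_mat W * U = 0\<^sub>m k l"
  proof (rule eq_matI)
    fix c' a assume "c' < dim_row (0\<^sub>m k l)" "a < dim_col (0\<^sub>m k l)"
    hence ca: "c' < k" "a < l" by auto
    obtain i c where ic: "i < s" "c < l" "col W c' = Ms i *\<^sub>v col U c" using colW'[OF ca(1)] by auto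
    have "(transpose_mat W * U) $$ (c', a) = col W c' \<bullet> col U a" using Wc U ca by auto
    also have "\<dots> = col U a \<bullet> (Ms i *\<^sub>v col U c)" unfolding ic(3)
      by (rule comm_scalar_prod[of _ N], insert M[OF ic(1)] U ca ic, auto intro!: carrier_vecI)
    also have "\<dots> = (transpose_mat U * Ms i * U) $$ (a, c)" by (rule bil_entry[OF U M[OF ic(1)] ca(2) ic(2), symmetric])
    also have "\<dots> = 0" using isoU[OF ic(1)] ca ic by simp
    finally show "(transpose_mat W * U) $$ (c', a) = 0\<^sub>m k l $$ (c', a)" using ca by simp
  qed (insert Wc U, auto)
  have WTD: "transpose_mat W * transpose_mat D = 1\<^sub>m k"
  proof -
    have "transpose_mat W * transpose_mat D = transpose_mat (D * W)" using D Wc by (subst transpose_mult[of _ k N]) auto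
    thus ?thesis using D by simp
  qed
  define A0 where "A0 = appc U (transpose_mat D)"
  have A0: "A0 \<in> carrier_mat N (l + k)" unfolding A0_def using appc_carrier[OF U DT] .
  have A0y: "A0 *\<^sub>v (0\<^sub>v l @\<^sub>v y) = transpose_mat D *\<^sub>v y" if y: "y \<in> carrier_vec k" for y
    unfolding A0_def using appc_mult_vec_app[OF U DT _ y, of "0\<^sub>v l"] U DT y by auto
  have iA0: "injm A0"
  proof (rule injmI[OF A0])
    fix x assume x: "x \<in> carrier_vec (l + k)" and A0x: "A0 *\<^sub>v x = 0\<^sub>v N"
    define x1 where "x1 = vec_first x l"
    define x2 where "x2 = vec_last x k"
    have x1: "x1 \<in> carrier_vec l" and x2: "x2 \<in> carrier_vec k" unfolding x1_def x2_def by auto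
    have xx: "x = x1 @\<^sub>v x2" unfolding x1_def x2_def using x by simp
    have e: "U *\<^sub>v x1 + transpose_mat D *\<^sub>v x2 = 0\<^sub>v N"
      using A0x appc_mult_vec_app[OF U DT x1 x2] unfolding A0_def xx by simp
    have "transpose_mat W *\<^sub>v (U *\<^sub>v x1 + transpose_mat D *\<^sub>v x2) = transpose_mat W *\<^sub>v (U *\<^sub>v x1) + transpose_mat W *\<^sub>v (transpose_mat D *\<^sub>v x2)"
      using Wc U DT x1 x2 by (intro mult_add_distrib_mat_vec) auto
    also have "transpose_mat W *\<^sub>v (U *\<^sub>v x1) = (transpose_mat W * U) *\<^sub>v x1"
      using Wc U x1 by (intro assoc_mult_mat_vec[symmetric]) auto
    also have "\<dots> = 0\<^sub>v k" unfolding WTU using x1 by auto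
    also have "transpose_mat W *\<^sub>v (transpose_mat D *\<^sub>v x2) = (transpose_mat W * transpose_mat D) *\<^sub>v x2"
      using Wc DT x2 by (intro assoc_mult_mat_vec[symmetric]) auto
    also have "\<dots> = x2" unfolding WTD using x2 by auto
    finally have "0\<^sub>v k + x2 = transpose_mat W *\<^sub>v 0\<^sub>v N" using e by simp
    hence x20: "x2 = 0\<^sub>v k" using x2 Wc by auto
    have "transpose_mat D *\<^sub>v 0\<^sub>v k = 0\<^sub>v N" using DT by (intro eq_vecI) auto
    hence "U *\<^sub>v x1 = 0\<^sub>v N" using e DT U x1 x20 by auto
    hence "x1 = 0\<^sub>v l" using injmD[OF iU U x1] by auto
    thus "x = 0\<^sub>v (l + k)" using xx x20 zero_append by simp
  qed
  have lkN: "l + k \<le> N" using injm_le[OF A0 iA0] .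
  obtain B where B: "B \<in> carrier_mat N (N - (l + k))" "injm (appc A0 B)" using extend_basis[OF A0 iA0] by auto
  define m where "m = N - (l + k)"
  have Bm: "B \<in> carrier_mat N m" using B unfolding m_def by simp
  have A0B: "appc A0 B \<in> carrier_mat N (l + k + m)" using appc_carrier[OF A0 Bm] .
  define Z where "Z = B - transpose_mat D * (transpose_mat W * B)"
  have Zc: "Z \<in> carrier_mat N m" unfolding Z_def using Bm DT Wc by auto
  define H where "H = appc A0 Z"
  have Hc: "H \<in> carrier_mat N N" unfolding H_def using appc_carrier[OF A0 Zc] lkN unfolding m_def by simp
  have Hc': "H \<in> carrier_mat N (l + k + m)" unfolding H_def using appc_carrier[OF A0 Zc] .
  have iH: "injm H"
  proof (rule injmI[OF Hc'])
    fix x assume x: "x \<in> carrier_vec (l + k + m)" and Hx: "H *\<^sub>v x = 0\<^sub>v N"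
    define xf where "xf = vec_first x (l + k)"
    define xl where "xl = vec_last x m"
    have xf: "xf \<in> carrier_vec (l + k)" and xl: "xl \<in> carrier_vec m" unfolding xf_def xl_def by auto
    have xx: "x = xf @\<^sub>v xl" unfolding xf_def xl_def using x by simp
    define y where "y = transpose_mat W *\<^sub>v (B *\<^sub>v xl)"
    have y: "y \<in> carrier_vec k" unfolding y_def using Wc Bm xl by auto
    define z where "z = 0\<^sub>v l @\<^sub>v y"
    have z: "z \<in> carrier_vec (l + k)" unfolding z_def using y by auto
    have Zxl: "Z *\<^sub>v xl = B *\<^sub>v xl - A0 *\<^sub>v z"
    proof -
      have "Z *\<^sub>v xl = B *\<^sub>v xl - (transpose_mat D * (transpose_mat W * B)) *\<^sub>v xl"
        unfolding Z_def by (rule minus_mult_distrib_mat_vec[OF Bm _ xl], insert DT Wc Bm, auto)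
      also have "(transpose_mat D * (transpose_mat W * B)) *\<^sub>v xl = transpose_mat D *\<^sub>v y"
      proof -
        have "(transpose_mat D * (transpose_mat W * B)) *\<^sub>v xl = transpose_mat D *\<^sub>v ((transpose_mat W * B) *\<^sub>v xl)"
          using DT Wc Bm xl by (intro assoc_mult_mat_vec) auto
        also have "(transpose_mat W * B) *\<^sub>v xl = transpose_mat W *\<^sub>v (B *\<^sub>v xl)"
          using Wc Bm xl by (intro assoc_mult_mat_vec) auto
        finally show ?thesis unfolding y_def .
      qed
      also have "\<dots> = A0 *\<^sub>v z" unfolding z_def using A0y[OF y] by simp
      finally show ?thesis .
    qed
    have "H *\<^sub>v x = A0 *\<^sub>v xf + Z *\<^sub>v xl" unfolding H_def xx by (rule appc_mult_vec_app[OF A0 Zc xf xl])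
    also have "\<dots> = appc A0 B *\<^sub>v ((xf - z) @\<^sub>v xl)"
    proof -
      have "appc A0 B *\<^sub>v ((xf - z) @\<^sub>v xl) = A0 *\<^sub>v (xf - z) + B *\<^sub>v xl"
        by (rule appc_mult_vec_app[OF A0 Bm _ xl], insert xf z, auto)
      also have "A0 *\<^sub>v (xf - z) = A0 *\<^sub>v xf - A0 *\<^sub>v z" by (rule mult_minus_distrib_mat_vec[OF A0 xf z])
      finally show ?thesis unfolding Zxl using A0 Bm xf xl z by (intro eq_vecI) auto
    qed
    finally have "appc A0 B *\<^sub>v ((xf - z) @\<^sub>v xl) = 0\<^sub>v N" using Hx by simp
    hence "(xf - z) @\<^sub>v xl = 0\<^sub>v (l + k + m)" using injmD[OF B(2) A0B] xf z xl by auto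
    hence e: "(xf - z) @\<^sub>v xl = 0\<^sub>v (l + k) @\<^sub>v 0\<^sub>v m" using zero_append by metis
    have e1: "xf - z = 0\<^sub>v (l + k)" and e2: "xl = 0\<^sub>v m" using append_vec_eq[of "xf - z" "l+k" "0\<^sub>v (l+k)"] e xf z by auto
    have "y = 0\<^sub>v k" unfolding y_def e2 using Wc Bm mat_vec_zero[OF Bm] mat_vec_zero[of "transpose_mat W" k N] by auto
    hence "z = 0\<^sub>v (l + k)" unfolding z_def using zero_append by metis
    hence "xf = 0\<^sub>v (l + k)" using e1 xf by (intro eq_vecI) (auto simp: vec_eq_iff)
    thus "x = 0\<^sub>v (l + k + m)" using xx e2 zero_append by simp
  qed
  define g where "g = transpose_mat H"
  have gc: "g \<in> carrier_mat N N" unfolding g_def using Hc by simp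
  have "det H \<noteq> 0" using det_0_iff_vec_prod_zero_field[OF Hc] injmD[OF iH Hc] by auto
  hence "det g \<noteq> 0" unfolding g_def using det_transpose[OF Hc] by simp
  hence ig: "invertible_mat g" using det_invertible[OF gc] by simp
  have WTH: "transpose_mat W * H = appc (appc (0\<^sub>m k l) (1\<^sub>m k)) (0\<^sub>m k m)"
  proof -
    have "transpose_mat W * H = appc (transpose_mat W * A0) (transpose_mat W * Z)"
      unfolding H_def by (rule mult_appc[OF _ A0 Zc], insert Wc, auto)
    also have "transpose_mat W * A0 = appc (transpose_mat W * U) (transpose_mat W * transpose_mat D)"
      unfolding A0_def by (rule mult_appc[OF _ U DT], insert Wc, auto)
    also have "transpose_mat W * Z = 0\<^sub>m k m"
    proof -
      have "transpose_mat W * Z = transpose_mat W * B - transpose_mat W * (transpose_mat D * (transpose_mat W * B))"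
        unfolding Z_def by (rule mult_minus_distrib_mat[of _ k N], insert Wc Bm DT, auto)
      also have "transpose_mat W * (transpose_mat D * (transpose_mat W * B)) = (transpose_mat W * transpose_mat D) * (transpose_mat W * B)"
        using Wc DT Bm by (intro assoc_mult_mat[symmetric]) auto
      also have "\<dots> = transpose_mat W * B" unfolding WTD using Wc Bm by auto
      finally show ?thesis using Wc Bm by simp
    qed
    finally show ?thesis unfolding WTU WTD .
  qed
  have ent: "(g * Ms i * transpose_mat g) $$ (r,c) = (if l \<le> r \<and> r < l + k \<and> r - l = i * l + c then 1 else 0)"
    if i: "i < s" and r: "r < N" and c: "c < l" for i r c
  proof -
    have ilc: "i * l + c < k"
    proof -
      have "i * l + c < i * l + l" using c by simp
      also have "\<dots> = (i+1) * l" by simp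
      also have "\<dots> \<le> s * l" using i by (intro mult_le_mono1) auto
      finally show ?thesis unfolding k_def .
    qed
    have colH: "col H c = col U c"
    proof -
      have "col H c = col A0 c" unfolding H_def using col_appc[OF A0 Zc, of c] c lkN by auto
      also have "\<dots> = col U c" unfolding A0_def using col_appc[OF U DT, of c] c by auto
      finally show ?thesis .
    qed
    have "(g * Ms i * transpose_mat g) $$ (r,c) = (transpose_mat H * Ms i * H) $$ (r,c)" unfolding g_def by simp
    also have "\<dots> = col H r \<bullet> (Ms i *\<^sub>v col H c)" by (rule bil_entry[OF Hc M[OF i] r], insert c lkN, auto)
    also have "\<dots> = col W (i * l + c) \<bullet> col H r" unfolding colH colW[OF i c]
      by (rule comm_scalar_prod[of _ N], insert Hc M[OF i] U c r, auto intro!: carrier_vecI)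
    also have "\<dots> = (transpose_mat W * H) $$ (i * l + c, r)" using Wc Hc ilc r by auto
    also have "\<dots> = (if l \<le> r \<and> r < l + k \<and> r - l = i * l + c then 1 else 0)"
      unfolding WTH using r ilc lkN unfolding m_def by (auto simp: appc_index)
    finally show ?thesis .
  qed
  show ?thesis using gc ig ent unfolding k_def by blast
qed



lemma subspace_basis:
  assumes sV: "csubspace N V" and dV: "cdim N V = n"
  shows "\<exists>P \<in> carrier_mat N n. injm P \<and> (\<forall>x. x \<in> V \<longleftrightarrow> (\<exists>y \<in> carrier_vec n. x = P *\<^sub>v y))"
proof -
  interpret VS: vec_space "TYPE(complex)" N .
  have subs: "subspace class_ring V (module_vec TYPE(complex) N)" using sV unfolding csubspace_def .
  have sub: "submodule class_ring V (module_vec TYPE(complex) N)" using subs unfolding subspace_def by auto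
  have Vc: "V \<subseteq> carrier_vec N" using sub unfolding submodule_def by auto
  define VV where "VV = (module_vec TYPE(complex) N)\<lparr>carrier := V\<rparr>"
  have vsVV: "vectorspace class_ring VV" unfolding VV_def by (rule VS.subspace_is_vs[OF subs])
  interpret VV: vectorspace class_ring VV by (rule vsVV)
  have cVV: "carrier VV = V" unfolding VV_def by simp
  have liiff: "VV.lin_dep S = VS.lin_dep S" if "S \<subseteq> V" for S
    unfolding VV_def by (rule VS.span_li_not_depend(2)[OF that sub])
  have spiff: "VV.span S = VS.span S" if "S \<subseteq> V" for S
    unfolding VV_def by (rule VS.span_li_not_depend(1)[OF that sub])
  have bound: "finite S \<and> card S \<le> N" if "S \<subseteq> carrier VV \<and> VV.lin_indpt S" for S
  proof -
    have S: "S \<subseteq> carrier_vec N" "VS.lin_indpt S" using that liiff cVV Vc by auto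
    show ?thesis using VS.li_le_dim[OF VS.fin_dim S(1) S(2)] VS.dim_is_n by simp
  qed
  have e: "{} \<subseteq> carrier VV \<and> VV.lin_indpt {}" unfolding VV.lin_dep_def by auto
  obtain A where A: "finite A" "maximal A (\<lambda>S. S \<subseteq> carrier VV \<and> VV.lin_indpt S)"
    using maximal_exists[of "\<lambda>S. S \<subseteq> carrier VV \<and> VV.lin_indpt S" N "{}", OF bound e] by blast
  have bA: "VV.basis A" by (rule VV.max_li_is_basis[OF A(2)])
  have cA: "card A = n" using VV.dim_basis[OF A(1) bA] dV unfolding cdim_def VV_def by simp
  have AV: "A \<subseteq> V" using bA cVV unfolding VV.basis_def by auto
  have liA: "VS.lin_indpt A" using bA liiff[OF AV] unfolding VV.basis_def by auto
  have spA: "VS.span A = V" using bA spiff[OF AV] cVV unfolding VV.basis_def by auto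
  obtain bs where bs: "set bs = A" "distinct bs" using finite_distinct_list[OF A(1)] by auto
  have lbs: "length bs = n" using distinct_card[OF bs(2)] bs(1) cA by simp
  have bsc: "set bs \<subseteq> carrier_vec N" using bs AV Vc by auto
  define P where "P = mat_of_cols N bs"
  have Pc: "P \<in> carrier_mat N n" unfolding P_def using lbs by auto
  have cP: "cols P = bs" unfolding P_def by (rule cols_mat_of_cols[OF bsc])
  have iP: "injm P"
  proof (rule injmI[OF Pc])
    fix v assume v: "v \<in> carrier_vec n" and Pv: "P *\<^sub>v v = 0\<^sub>v N"
    show "v = 0\<^sub>v n"
    proof (rule ccontr)
      assume "v \<noteq> 0\<^sub>v n"
      from VS.lin_depI[OF Pc v this Pv] cP bs have "VS.lin_dep A" by auto
      thus False using liA by auto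
    qed
  qed
  have "VS.col_space P = V" unfolding VS.col_space_def cP bs(1) spA ..
  hence "V = {y \<in> carrier_vec N. \<exists>x \<in> carrier_vec n. P *\<^sub>v x = y}"
    using VS.col_space_eq[OF Pc] Pc by auto
  hence "\<forall>x. x \<in> V \<longleftrightarrow> (\<exists>y \<in> carrier_vec n. x = P *\<^sub>v y)" using Pc by auto
  thus ?thesis using Pc iP by auto
qed

lemma foldr_sum:
  assumes "length vs = length Ms" "\<And>i. i < length Ms \<Longrightarrow> Ms ! i \<in> carrier_mat N N"
    "\<And>i. i < length Ms \<Longrightarrow> vs ! i \<in> carrier_vec N"
  shows "foldr (+) (map2 (\<lambda>A v. A *\<^sub>v v) Ms vs) (0\<^sub>v N) =
     vec N (\<lambda>r. \<Sum>i\<in>{0..<length Ms}. (Ms ! i *\<^sub>v vs ! i) $ r)"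
  using assms
proof (induction Ms arbitrary: vs)
  case Nil
  thus ?case by (intro eq_vecI) auto
next
  case (Cons M Ms)
  then obtain v vs' where vs: "vs = v # vs'" by (cases vs) auto
  have IH: "foldr (+) (map2 (\<lambda>A v. A *\<^sub>v v) Ms vs') (0\<^sub>v N) =
     vec N (\<lambda>r. \<Sum>i\<in>{0..<length Ms}. (Ms ! i *\<^sub>v vs' ! i) $ r)"
  proof (rule Cons.IH)
    show "length vs' = length Ms" using Cons.prems vs by auto
    fix i assume i: "i < length Ms"
    show "Ms ! i \<in> carrier_mat N N" using Cons.prems(2)[of "Suc i"] i by simp
    show "vs' ! i \<in> carrier_vec N" using Cons.prems(3)[of "Suc i"] i vs by simp
  qed
  have M: "M \<in> carrier_mat N N" using Cons.prems(2)[of 0] by simp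
  show ?case unfolding vs
  proof (intro eq_vecI)
    fix r assume "r < dim_vec (vec N (\<lambda>r. \<Sum>i\<in>{0..<length (M # Ms)}. ((M # Ms) ! i *\<^sub>v (v # vs') ! i) $ r))"
    hence r: "r < N" by simp
    have "foldr (+) (map2 (\<lambda>A v. A *\<^sub>v v) (M # Ms) (v # vs')) (0\<^sub>v N) = M *\<^sub>v v + foldr (+) (map2 (\<lambda>A v. A *\<^sub>v v) Ms vs') (0\<^sub>v N)"
      by simp
    hence "foldr (+) (map2 (\<lambda>A v. A *\<^sub>v v) (M # Ms) (v # vs')) (0\<^sub>v N) $ r = (M *\<^sub>v v) $ r + (\<Sum>i\<in>{0..<length Ms}. (Ms ! i *\<^sub>v vs' ! i) $ r)"
      using IH r M by simp
    also have "\<dots> = (\<Sum>i\<in>{0..<length (M # Ms)}. ((M # Ms) ! i *\<^sub>v (v # vs') ! i) $ r)"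
      by (simp add: sum.atLeast0_lessThan_Suc_shift del: sum.op_ivl_Suc)
    finally show "foldr (+) (map2 (\<lambda>A v. A *\<^sub>v v) (M # Ms) (v # vs')) (0\<^sub>v N) $ r = vec N (\<lambda>r. \<Sum>i\<in>{0..<length (M # Ms)}. ((M # Ms) ! i *\<^sub>v (v # vs') ! i) $ r) $ r"
      using r by simp
  next
    show "dim_vec (foldr (+) (map2 (\<lambda>A v. A *\<^sub>v v) (M # Ms) (v # vs')) (0\<^sub>v N)) = dim_vec (vec N (\<lambda>r. \<Sum>i\<in>{0..<length (M # Ms)}. ((M # Ms) ! i *\<^sub>v (v # vs') ! i) $ r))"
      using IH M by simp
  qed
qed



lemma idx_lt: assumes "i < (s::nat)" "a < n" shows "i * n + a < s * n"
proof -
  have "i * n + a < i * n + n" using assms by simp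
  also have "\<dots> = (i+1) * n" by simp
  also have "\<dots> \<le> s * n" using assms by (intro mult_le_mono1) auto
  finally show ?thesis .
qed

lemma blk_div_mod: assumes n: "0 < n" and i: "i < s" and y: "\<And>i. i < s \<Longrightarrow> yf i \<in> carrier_vec n"
  shows "blk n i (vec (s * n) (\<lambda>c. yf (c div n) $ (c mod n))) = yf i"
proof (rule eq_vecI)
  fix a assume "a < dim_vec (yf i)" hence a: "a < n" using y[OF i] by simp
  have "i * n + a < s * n"
  proof -
    have "i * n + a < i * n + n" using a by simp
    also have "\<dots> = (i+1) * n" by simp
    also have "\<dots> \<le> s * n" using i by (intro mult_le_mono1) auto
    finally show ?thesis .
  qed
  thus "blk n i (vec (s * n) (\<lambda>c. yf (c div n) $ (c mod n))) $ a = yf i $ a"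
    using a n by (simp add: blk_def)
qed (use y[OF i] in \<open>auto simp: blk_def\<close>)

lemma img_sum_colspace:
  assumes Pc: "P \<in> carrier_mat N n" and Vchar: "\<forall>x. x \<in> V \<longleftrightarrow> (\<exists>y \<in> carrier_vec n. x = P *\<^sub>v y)"
    and Mc: "\<And>i. i < length Ms \<Longrightarrow> Ms ! i \<in> carrier_mat N N" and n0: "0 < n"
  shows "img_sum N Ms V = {z \<in> carrier_vec N. \<exists>x \<in> carrier_vec (length Ms * n).
            bigm N n (\<lambda>i. Ms ! i * P) (length Ms) *\<^sub>v x = z}"
proof -
  define s where "s = length Ms"
  define K where "K = bigm N n (\<lambda>i. Ms ! i * P) s"
  have MP: "\<And>i. i < s \<Longrightarrow> Ms ! i * P \<in> carrier_mat N n" using Mc Pc unfolding s_def by (meson mult_carrier_mat)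
  have Kx: "K *\<^sub>v x = vec N (\<lambda>r. \<Sum>i\<in>{0..<s}. ((Ms ! i * P) *\<^sub>v blk n i x) $ r)" if x: "x \<in> carrier_vec (s * n)" for x
    unfolding K_def by (rule bigm_mult_vec[OF MP x])
  have MPv: "(Ms ! i * P) *\<^sub>v y = Ms ! i *\<^sub>v (P *\<^sub>v y)" if "i < s" "y \<in> carrier_vec n" for i y
    using Mc[of i] Pc that unfolding s_def by (intro assoc_mult_mat_vec) auto
  have "img_sum N Ms V \<subseteq> {z \<in> carrier_vec N. \<exists>x \<in> carrier_vec (s * n). K *\<^sub>v x = z}"
  proof
    fix z assume "z \<in> img_sum N Ms V"
    then obtain vs where vs: "z = foldr (+) (map2 (\<lambda>A v. A *\<^sub>v v) Ms vs) (0\<^sub>v N)" "length vs = s" "set vs \<subseteq> V"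
      unfolding img_sum_def s_def by auto
    have "\<forall>i<s. \<exists>y \<in> carrier_vec n. vs ! i = P *\<^sub>v y" using vs(2,3) Vchar by (metis nth_mem subsetD)
    then obtain yf where yf: "\<And>i. i < s \<Longrightarrow> yf i \<in> carrier_vec n \<and> vs ! i = P *\<^sub>v yf i" by metis
    define x where "x = vec (s * n) (\<lambda>c. yf (c div n) $ (c mod n))"
    have x: "x \<in> carrier_vec (s * n)" unfolding x_def by simp
    have bx: "blk n i x = yf i" if "i < s" for i unfolding x_def by (rule blk_div_mod[OF n0 that], insert yf, auto)
    have vsc: "\<And>i. i < length Ms \<Longrightarrow> vs ! i \<in> carrier_vec N" using yf Pc unfolding s_def by auto
    have "z = vec N (\<lambda>r. \<Sum>i\<in>{0..<s}. (Ms ! i *\<^sub>v vs ! i) $ r)"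
      unfolding vs(1) s_def by (rule foldr_sum[OF vs(2)[unfolded s_def] Mc vsc])
    also have "\<dots> = K *\<^sub>v x" unfolding Kx[OF x]
      by (intro eq_vecI, simp, intro sum.cong[OF refl], insert yf bx MPv, auto)
    finally show "z \<in> {z \<in> carrier_vec N. \<exists>x \<in> carrier_vec (s * n). K *\<^sub>v x = z}"
      using x K_def by (auto intro: mult_mat_vec_carrier[OF bigm_carrier])
  qed
  moreover have "{z \<in> carrier_vec N. \<exists>x \<in> carrier_vec (s * n). K *\<^sub>v x = z} \<subseteq> img_sum N Ms V"
  proof
    fix z assume "z \<in> {z \<in> carrier_vec N. \<exists>x \<in> carrier_vec (s * n). K *\<^sub>v x = z}"
    then obtain x where x: "x \<in> carrier_vec (s * n)" "z = K *\<^sub>v x" by auto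
    define vs where "vs = map (\<lambda>i. P *\<^sub>v blk n i x) [0..<s]"
    have lvs: "length vs = length Ms" unfolding vs_def s_def by simp
    have svs: "set vs \<subseteq> V" unfolding vs_def using Vchar blk_carrier by fastforce
    have vsc: "\<And>i. i < length Ms \<Longrightarrow> vs ! i \<in> carrier_vec N" unfolding vs_def s_def using Pc by auto
    have "foldr (+) (map2 (\<lambda>A v. A *\<^sub>v v) Ms vs) (0\<^sub>v N) = vec N (\<lambda>r. \<Sum>i\<in>{0..<s}. (Ms ! i *\<^sub>v vs ! i) $ r)"
      unfolding s_def by (rule foldr_sum[OF lvs Mc vsc])
    also have "\<dots> = K *\<^sub>v x" unfolding Kx[OF x(1)]
      by (intro eq_vecI, simp, intro sum.cong[OF refl], insert MPv, auto simp: vs_def)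
    finally have "z = foldr (+) (map2 (\<lambda>A v. A *\<^sub>v v) Ms vs) (0\<^sub>v N)" using x by simp
    thus "z \<in> img_sum N Ms V" unfolding img_sum_def using lvs svs by auto
  qed
  ultimately show ?thesis unfolding K_def s_def by blast
qed

lemma rank_injm:
  assumes K: "K \<in> carrier_mat N m" and r: "vec_space.rank N K = m"
  shows "injm (K :: complex mat)"
proof -
  interpret VS: vec_space "TYPE(complex)" N .
  have fin: "\<And>T. T \<subseteq> set (cols K) \<and> VS.lin_indpt T \<Longrightarrow> finite T \<and> card T \<le> card (set (cols K))"
    by (meson List.finite_set card_mono rev_finite_subset)
  have e: "{} \<subseteq> set (cols K) \<and> VS.lin_indpt {}" unfolding VS.lin_dep_def by auto
  obtain S where S: "finite S" "maximal S (\<lambda>T. T \<subseteq> set (cols K) \<and> VS.lin_indpt T)"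
    using maximal_exists[of "\<lambda>T. T \<subseteq> set (cols K) \<and> VS.lin_indpt T" "card (set (cols K))" "{}", OF fin e] by blast
  have rS: "VS.rank K = card S" by (rule VS.rank_card_indpt[OF K S(2)])
  have "card S \<le> card (set (cols K))" using S(2) unfolding maximal_def by (simp add: card_mono)
  hence "m \<le> card (set (cols K))" using rS r by simp
  moreover have "length (cols K) = m" using K by simp
  ultimately have dist: "distinct (cols K)" using card_length[of "cols K"] card_distinct by (metis le_antisym)
  have li: "VS.lin_indpt (set (cols K))" by (rule VS.full_rank_lin_indpt[OF K r dist])
  show ?thesis
  proof (rule injmI[OF K])
    fix v assume v: "v \<in> carrier_vec m" and Kv: "K *\<^sub>v v = 0\<^sub>v N"
    show "v = 0\<^sub>v m"
    proof (rule ccontr)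
      assume "v \<noteq> 0\<^sub>v m"
      from VS.lin_depI[OF K v this Kv dist] li show False by simp
    qed
  qed
qed

lemma injW:
  fixes Ms :: "nat \<Rightarrow> complex mat"
  assumes iK: "injm (bigm N n (\<lambda>i. Ms i * P) s)" and Pc: "P \<in> carrier_mat N n"
    and Rc: "R \<in> carrier_mat n l" and iR: "injm R" and Mc: "\<And>i. i < s \<Longrightarrow> Ms i \<in> carrier_mat N N"
    and n0: "0 < n" and l0: "0 < l"
  shows "injm (bigm N l (\<lambda>i. Ms i * (P * R)) s)"
proof (rule injmI[OF bigm_carrier])
  fix x assume x: "x \<in> carrier_vec (s * l)" and Wx: "bigm N l (\<lambda>i. Ms i * (P * R)) s *\<^sub>v x = 0\<^sub>v N"
  define yf where "yf i = R *\<^sub>v blk l i x" for i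
  have yfc: "\<And>i. i < s \<Longrightarrow> yf i \<in> carrier_vec n" unfolding yf_def using Rc by auto
  define y where "y = vec (s * n) (\<lambda>c. yf (c div n) $ (c mod n))"
  have y: "y \<in> carrier_vec (s * n)" unfolding y_def by simp
  have by_: "blk n i y = yf i" if "i < s" for i unfolding y_def by (rule blk_div_mod[OF n0 that yfc])
  have MP: "\<And>i. i < s \<Longrightarrow> Ms i * P \<in> carrier_mat N n" using Mc Pc by (meson mult_carrier_mat)
  have MPR: "\<And>i. i < s \<Longrightarrow> Ms i * (P * R) \<in> carrier_mat N l" using Mc Pc Rc by (meson mult_carrier_mat)
  have eq: "((Ms i * P) *\<^sub>v yf i) = ((Ms i * (P * R)) *\<^sub>v blk l i x)" if i: "i < s" for i
  proof -
    have "(Ms i * (P * R)) *\<^sub>v blk l i x = ((Ms i * P) * R) *\<^sub>v blk l i x"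
      using Mc[OF i] Pc Rc by (simp add: assoc_mult_mat)
    also have "\<dots> = (Ms i * P) *\<^sub>v (R *\<^sub>v blk l i x)" using MP[OF i] Rc by (intro assoc_mult_mat_vec) auto
    finally show ?thesis unfolding yf_def by simp
  qed
  have e1: "bigm N n (\<lambda>i. Ms i * P) s *\<^sub>v y = vec N (\<lambda>r. \<Sum>i\<in>{0..<s}. ((Ms i * P) *\<^sub>v blk n i y) $ r)"
    by (rule bigm_mult_vec[OF MP y])
  have e2: "bigm N l (\<lambda>i. Ms i * (P * R)) s *\<^sub>v x = vec N (\<lambda>r. \<Sum>i\<in>{0..<s}. ((Ms i * (P * R)) *\<^sub>v blk l i x) $ r)"
    by (rule bigm_mult_vec[OF MPR x])
  have "bigm N n (\<lambda>i. Ms i * P) s *\<^sub>v y = bigm N l (\<lambda>i. Ms i * (P * R)) s *\<^sub>v x"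
    unfolding e1 e2
    by (intro eq_vecI, simp, intro sum.cong[OF refl], insert eq by_, auto)
  hence "y = 0\<^sub>v (s * n)" using injmD[OF iK bigm_carrier y] Wx by simp
  hence yf0: "yf i = 0\<^sub>v n" if i: "i < s" for i
  proof -
    have "yf i = blk n i (0\<^sub>v (s*n))" using by_[OF i] \<open>y = 0\<^sub>v (s * n)\<close> by simp
    also have "\<dots> = 0\<^sub>v n"
    proof (rule eq_vecI)
      fix a assume "a < dim_vec (0\<^sub>v n)" hence a: "a < n" by simp
      have "i * n + a < s * n" by (rule idx_lt[OF i a])
      thus "blk n i (0\<^sub>v (s*n)) $ a = 0\<^sub>v n $ a" using a by (simp add: blk_def)
    qed (simp add: blk_def)
    finally show ?thesis .
  qed
  have b0: "blk l i x = 0\<^sub>v l" if i: "i < s" for i using injmD[OF iR Rc blk_carrier] yf0[OF i] unfolding yf_def by auto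
  show "x = 0\<^sub>v (s * l)"
  proof (rule eq_vecI)
    fix c assume "c < dim_vec (0\<^sub>v (s * l))" hence c: "c < s * l" by simp
    have i: "c div l < s" using c by (simp add: less_mult_imp_div_less)
    have a: "c mod l < l" using l0 by simp
    have "x $ c = blk l (c div l) x $ (c mod l)" using a by (simp add: blk_def mult.commute)
    thus "x $ c = 0\<^sub>v (s * l) $ c" using b0[OF i] a c by simp
  qed (use x in auto)
qed



theorem lemma3p7:
  fixes p q l N :: nat and Ms :: "complex mat list" and V :: "complex vec set"
  assumes len: "length Ms = p + q"
    and sq: "\<forall>i < p + q. Ms ! i \<in> carrier_mat N N"
    and sym: "\<forall>i < p. transpose_mat (Ms ! i) = Ms ! i"
    and alt: "\<forall>i. p \<le> i \<and> i < p + q \<longrightarrow> transpose_mat (Ms ! i) = - (Ms ! i)"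
    and V: "csubspace N V" "cdim N V = 2 ^ (p + q) * l"
    and sumdim: "cdim N (img_sum N Ms V) = (p + q) * 2 ^ (p + q) * l"
  shows "\<exists>g \<in> carrier_mat N N. invertible_mat g \<and>
           (\<forall>i < p + q. \<forall>r < N. \<forall>c < l.
              (g * (Ms ! i) * transpose_mat g) $$ (r, c) =
                (if (i + 1) * l \<le> r \<and> r < (i + 2) * l \<and> r - (i + 1) * l = c then 1 else 0))"
proof -
  define s where "s = p + q"
  show ?thesis
  proof (cases "l = 0 \<or> s = 0")
    case True
    have "det (1\<^sub>m N :: complex mat) \<noteq> 0" by simp
    hence "invertible_mat (1\<^sub>m N :: complex mat)" by (intro det_invertible) auto
    thus ?thesis using True unfolding s_def by (intro bexI[of _ "1\<^sub>m N"]) auto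
  next
    case False
    hence l0: "0 < l" and s0: "0 < s" by auto
    define n where "n = 2 ^ s * l"
    have n0: "0 < n" unfolding n_def using l0 by simp
    have Mc: "\<And>i. i < length Ms \<Longrightarrow> Ms ! i \<in> carrier_mat N N" using sq len by auto
    have Mc': "\<And>i. i < s \<Longrightarrow> Ms ! i \<in> carrier_mat N N" using sq unfolding s_def by auto
    have sk: "\<And>i. i < s \<Longrightarrow> transpose_mat (Ms ! i) = Ms ! i \<or> transpose_mat (Ms ! i) = - (Ms ! i)"
      using sym alt unfolding s_def by (metis not_le)
    obtain P where P: "P \<in> carrier_mat N n" "injm P" "\<forall>x. x \<in> V \<longleftrightarrow> (\<exists>y \<in> carrier_vec n. x = P *\<^sub>v y)"
      using subspace_basis[OF V(1)] V(2) unfolding n_def s_def by auto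
    define K where "K = bigm N n (\<lambda>i. Ms ! i * P) s"
    have img: "img_sum N Ms V = {z \<in> carrier_vec N. \<exists>x \<in> carrier_vec (s * n). K *\<^sub>v x = z}"
      unfolding K_def using img_sum_colspace[OF P(1) P(3) Mc n0] len unfolding s_def by simp
    interpret VS: vec_space "TYPE(complex)" N .
    have Kc: "K \<in> carrier_mat N (s * n)" unfolding K_def by simp
    have "VS.col_space K = {z \<in> carrier_vec N. \<exists>x \<in> carrier_vec (s * n). K *\<^sub>v x = z}"
      using VS.col_space_eq[OF Kc] Kc by simp
    hence imgc: "img_sum N Ms V = VS.span (set (cols K))" using img unfolding VS.col_space_def by simp
    have "VS.rank K = cdim N (img_sum N Ms V)" unfolding imgc cdim_def VS.rank_def ..
    hence rk: "VS.rank K = s * n" using sumdim unfolding s_def n_def by (simp add: mult.assoc)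
    have iK: "injm K" by (rule rank_injm[OF Kc rk])
    obtain R where R: "R \<in> carrier_mat n (2^(s-s) * l)" "injm R"
      "\<forall>i<s. transpose_mat (P * R) * Ms ! i * (P * R) = 0\<^sub>m (2^(s-s) * l) (2^(s-s) * l)"
      using iterate[of P N s l "\<lambda>i. Ms ! i", OF P(1)[unfolded n_def] Mc' sk, of s] unfolding n_def by auto
    have Rc: "R \<in> carrier_mat n l" using R(1) by simp
    have U: "P * R \<in> carrier_mat N l" using P(1) Rc by auto
    have iU: "injm (P * R)" by (rule injm_mult[OF P(1) Rc P(2) R(2)])
    have isoU: "\<And>i. i < s \<Longrightarrow> transpose_mat (P * R) * Ms ! i * (P * R) = 0\<^sub>m l l" using R(3) by simp
    have iW: "injm (bigm N l (\<lambda>i. Ms ! i * (P * R)) s)"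
      by (rule injW[OF iK[unfolded K_def] P(1) Rc R(2) Mc' n0 l0])
    obtain g where g: "g \<in> carrier_mat N N" "invertible_mat g"
      "\<forall>i<s. \<forall>r<N. \<forall>c<l. (g * Ms ! i * transpose_mat g) $$ (r,c) = (if l \<le> r \<and> r < l + s * l \<and> r - l = i * l + c then 1 else 0)"
      using final_g[OF U iU Mc' isoU iW] by blast
    have cond: "(l \<le> r \<and> r < l + s * l \<and> r - l = i * l + c) \<longleftrightarrow> ((i + 1) * l \<le> r \<and> r < (i + 2) * l \<and> r - (i + 1) * l = c)"
      if i: "i < s" and c: "c < l" for i r c
    proof -
      have e1: "(i + 1) * l = l + i * l" by simp
      have e2: "(i + 2) * l = l + i * l + l" by simp
      have e3: "i * l + l \<le> s * l" using i by (metis Suc_eq_plus1 Suc_leI add.commute mult_Suc mult_le_mono1)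
      show ?thesis unfolding e1 e2 using e3 c by linarith
    qed
    show ?thesis using g cond unfolding s_def by (intro bexI[of _ g]) auto
  qed
qed


end
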